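(* Let $k\ge2$ and $n=2k-1$, and let $\Delta_+$ be the standard $n$-simplex, i.e. the convex hull of the standard basis vectors of $\mathbb R^{n+1}=\mathbb R^{2k}$. There exists a modular block whose outer terminal is $\partial\Delta_+$.
   Context: Let $k\ge2$, $n=2k-1$. A modular block is a set $\Omega=\mathrm{closure}(\Delta_0\setminus\Delta_1\setminus\Delta_2)$ where $\Delta_0$ is an $n$-simplex and $\Delta_1,\Delta_2\subset\Delta_0$ are $n$-simplices with disjoint interiors such that: (1) for any indices $i\neq j$ in $\{0,1,2\}$, $\Delta_i$ and $\Delta_j$ have exactly $k$ common vertices and $\partial\Delta_i\cap\partial\Delta_j$ is the convex hull of these common vertices; (2) there is an order-3 piecewise-linear homeomorphism $\sigma\colon\Omega\to\Omega$ which is affine on each $\partial\Delta_j$ and maps $\partial\Delta_0\to\partial\Delta_1\to\partial\Delta_2\to\partial\Delta_0$. The sets $\partial\Delta_j$ are the terminals; $\partial\Delta_0$ is the outer terminal. *)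

theory Defs
  imports "HOL-Analysis.Analysis"
begin

definition simplex_verts :: "nat \<Rightarrow> ('a::euclidean_space) set \<Rightarrow> bool" where
  "simplex_verts m V \<longleftrightarrow> finite V \<and> card V = m + 1 \<and> \<not> affine_dependent V"

definition affine_on :: "('a::euclidean_space) set \<Rightarrow> ('a \<Rightarrow> 'b::euclidean_space) \<Rightarrow> bool" where
  "affine_on S f \<longleftrightarrow> (\<exists>h c. linear h \<and> (\<forall>x\<in>S. f x = h x + c))"

definition pl_on :: "('a::euclidean_space) set \<Rightarrow> ('a \<Rightarrow> 'a) \<Rightarrow> bool" where
  "pl_on S f \<longleftrightarrow> (\<exists>\<T>. finite \<T> \<and>
      (\<forall>W\<in>\<T>. finite W \<and> W \<noteq> {} \<and> \<not> affine_dependent W \<and> affine_on (convex hull W) f) \<and>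
      \<Union> ((\<lambda>W. convex hull W) ` \<T>) = S)"

text \<open>Boundaries of
simplices are relative boundaries (rel_frontier), interiors relative interiors.\<close>
definition modular_block ::
  "nat \<Rightarrow> ('a::euclidean_space) set \<Rightarrow> 'a set \<Rightarrow> 'a set \<Rightarrow> ('a \<Rightarrow> 'a) \<Rightarrow> bool" where
  "modular_block k V0 V1 V2 \<sigma> \<longleftrightarrow>
     (let V = (\<lambda>i::nat. if i = 0 then V0 else if i = 1 then V1 else V2);
          D = (\<lambda>i. convex hull (V i));
          \<Omega> = closure (D 0 - D 1 - D 2) in
      (\<forall>i\<in>{0,1,2}. simplex_verts (2*k - 1) (V i)) \<and>
      D 1 \<subseteq> D 0 \<and> D 2 \<subseteq> D 0 \<and>
      rel_interior (D 1) \<inter> rel_interior (D 2) = {} \<and>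
      (\<forall>i\<in>{0,1,2}. \<forall>j\<in>{0,1,2}. i \<noteq> j \<longrightarrow>
          card (V i \<inter> V j) = k \<and>
          rel_frontier (D i) \<inter> rel_frontier (D j) = convex hull (V i \<inter> V j)) \<and>
      homeomorphism \<Omega> \<Omega> \<sigma> (\<sigma> \<circ> \<sigma>) \<and>
      (\<forall>x\<in>\<Omega>. \<sigma> (\<sigma> (\<sigma> x)) = x) \<and>
      (\<exists>x\<in>\<Omega>. \<sigma> x \<noteq> x) \<and>
      pl_on \<Omega> \<sigma> \<and>
      (\<forall>i\<in>{0,1,2}. affine_on (rel_frontier (D i)) \<sigma>) \<and>
      \<sigma> ` rel_frontier (D 0) = rel_frontier (D 1) \<and>
      \<sigma> ` rel_frontier (D 1) = rel_frontier (D 2) \<and>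
      \<sigma> ` rel_frontier (D 2) = rel_frontier (D 0))"

end

theory Submission
  imports Defs
begin

locale blk =
  fixes k :: nat and idx :: "nat \<Rightarrow> 'n::finite"
  assumes k2: "2 \<le> k" and bij: "bij_betw idx {..<2*k} (UNIV::'n set)"
begin

definition "a i = idx i"
definition "b i = idx (i + k)"
definition "s = 1 / (2 * (2 * real k - 1))"
definition "r = 2 * s"
definition e :: "'n \<Rightarrow> real^'n" where "e j = axis j 1"
definition p :: "nat \<Rightarrow> real^'n" where
  "p i = (\<chi> j. if j = a i \<or> j = b i then r - s else r)"
definition vtx :: "nat \<times> nat \<Rightarrow> real^'n" where
  "vtx q = (if snd q = 0 then e (a (fst q)) else if snd q = 1 then e (b (fst q)) else p (fst q))"
definition "I0 = {..<k} \<times> {..<3::nat}"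
definition "Jc c = {q \<in> I0. snd q \<noteq> c (fst q)}"
definition "Simp J = {z::nat\<times>nat\<Rightarrow>real. (\<forall>q. q \<notin> J \<longrightarrow> z q = 0) \<and> (\<forall>q\<in>J. 0 \<le> z q) \<and> sum z J = 1}"
definition "L z = (\<Sum>q\<in>I0. z q *\<^sub>R vtx q)"
definition "Wt z = (\<Sum>i<k. z (i,2))"

lemma s_pos: "s > 0" using k2 by (simp add: s_def)
lemma r_s: "r = 2 * s" by (simp add: r_def)
lemma s_eq: "2 * s * (2 * real k - 1) = 1" using k2 by (simp add: s_def)

lemma a_inj: "i < k \<Longrightarrow> i' < k \<Longrightarrow> a i = a i' \<longleftrightarrow> i = i'"
  using bij unfolding a_def bij_betw_def inj_on_def by auto
lemma b_inj: "i < k \<Longrightarrow> i' < k \<Longrightarrow> b i = b i' \<longleftrightarrow> i = i'"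
proof -
  assume h: "i < k" "i' < k"
  have "i + k \<in> {..<2*k}" "i' + k \<in> {..<2*k}" using h by auto
  moreover have "inj_on idx {..<2*k}" using bij by (simp add: bij_betw_def)
  ultimately have "idx (i + k) = idx (i' + k) \<longleftrightarrow> i + k = i' + k" by (auto dest: inj_onD)
  then show ?thesis by (simp add: b_def)
qed
lemma a_ne_b: "i < k \<Longrightarrow> i' < k \<Longrightarrow> a i \<noteq> b i'"
  using bij unfolding a_def b_def bij_betw_def inj_on_def by fastforce
lemma ab_cover: "\<exists>i<k. j = a i \<or> j = b i"
proof -
  obtain m where m: "m < 2*k" "j = idx m" using bij unfolding bij_betw_def by (metis UNIV_I imageE lessThan_iff)
  show ?thesis
  proof (cases "m < k")
    case True then show ?thesis using m by (auto simp: a_def)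
  next
    case False then show ?thesis using m by (auto simp: b_def intro!: exI[of _ "m - k"])
  qed
qed

lemma sum_I0: "sum f I0 = (\<Sum>i<k. f (i,0) + f (i,1) + f (i,2))"
proof -
  have "sum f I0 = (\<Sum>i<k. \<Sum>t<3. f (i,t))"
    unfolding I0_def by (simp add: sum.cartesian_product)
  also have "... = (\<Sum>i<k. f (i,0) + f (i,1) + f (i,2))"
    by (simp add: numeral_3_eq_3 numeral_2_eq_2 lessThan_Suc add.commute add.left_commute)
  finally show ?thesis .
qed

lemma e_nth: "e j $ j' = (if j' = j then 1 else 0)" by (simp add: e_def axis_def)
lemma p_nth: "p i $ j = (if j = a i \<or> j = b i then r - s else r)" by (simp add: p_def)

lemma L_nth: "L z $ j = (\<Sum>i<k. z (i,0) * (if j = a i then 1 else 0) + z (i,1) * (if j = b i then 1 else 0)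
     + z (i,2) * (if j = a i \<or> j = b i then r - s else r))"
  unfolding L_def by (simp add: sum_I0 vtx_def e_nth p_nth)

lemma L_a: assumes "i0 < k" shows "L z $ a i0 = z (i0,0) + r * Wt z - s * z (i0,2)"
proof -
  have "L z $ a i0 = (\<Sum>i<k. (if i = i0 then z (i,0) else 0) + (z (i,2) * r - (if i = i0 then s * z (i,2) else 0)))"
    unfolding L_nth using assms by (intro sum.cong) (auto simp: a_inj a_ne_b algebra_simps)
  also have "... = z (i0,0) + r * Wt z - s * z (i0,2)"
    using assms by (simp add: sum.distrib sum_subtractf Wt_def sum_distrib_left mult.commute)
  finally show ?thesis .
qed

lemma L_b: assumes "i0 < k" shows "L z $ b i0 = z (i0,1) + r * Wt z - s * z (i0,2)"
proof -
  have "L z $ b i0 = (\<Sum>i<k. (if i = i0 then z (i,1) else 0) + (z (i,2) * r - (if i = i0 then s * z (i,2) else 0)))"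
    unfolding L_nth using assms by (intro sum.cong) (auto simp: b_inj a_ne_b[symmetric] algebra_simps dest: a_ne_b)
  also have "... = z (i0,1) + r * Wt z - s * z (i0,2)"
    using assms by (simp add: sum.distrib sum_subtractf Wt_def sum_distrib_left mult.commute)
  finally show ?thesis .
qed

lemma vec_eq_ab: "(x::real^'n) = y \<longleftrightarrow> (\<forall>i<k. x $ a i = y $ a i \<and> x $ b i = y $ b i)"
  by (metis ab_cover vec_eq_iff)

lemma s_le: "s \<le> 1/6"
proof -
  have "6 \<le> 2 * (2 * real k - 1)" using k2 by simp
  then show ?thesis unfolding s_def by (simp add: field_simps)
qed

lemma e_eq: "e j = e j' \<longleftrightarrow> j = j'"
  by (metis e_nth zero_neq_one)
lemma e_ne_p: "e j \<noteq> p i"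
proof
  assume "e j = p i"
  then have "e j $ j = p i $ j" by simp
  then show False using s_le s_pos by (simp add: e_nth p_nth r_s split: if_splits)
qed
lemma p_eq: assumes "i < k" "i' < k" shows "p i = p i' \<longleftrightarrow> i = i'"
proof
  assume h: "p i = p i'"
  show "i = i'"
  proof (rule ccontr)
    assume "i \<noteq> i'"
    then have "p i $ a i \<noteq> p i' $ a i" using assms s_pos by (simp add: p_nth a_inj a_ne_b)
    then show False using h by simp
  qed
qed simp

lemma vtx_inj: "inj_on vtx I0"
  unfolding inj_on_def I0_def
proof (clarsimp)
  fix i t i' t' assume h: "i < k" "t < 3" "i' < k" "t' < 3" "vtx (i,t) = vtx (i',t')"
  have "t \<in> {0,1,2}" "t' \<in> {0,1,2}" using h by auto
  have ne1: "a i \<noteq> b i'" "b i \<noteq> a i'" using h a_ne_b by metis+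
  have ne2: "e j \<noteq> p i" "p i \<noteq> e j" for j i using e_ne_p by metis+
  show "i = i' \<and> t = t'" using \<open>t \<in> {0,1,2}\<close> \<open>t' \<in> {0,1,2}\<close> h(5) ne1 ne2
    by (simp add: vtx_def) (elim disjE; simp add: e_eq p_eq[OF h(1,3)] a_inj[OF h(1,3)] b_inj[OF h(1,3)])
qed

lemma Simp_I0: "J \<subseteq> I0 \<Longrightarrow> z \<in> Simp J \<Longrightarrow> sum z I0 = 1"
proof -
  assume J: "J \<subseteq> I0" and z: "z \<in> Simp J"
  have "sum z I0 = sum z J"
    by (rule sum.mono_neutral_right[OF _ J]) (use z in \<open>auto simp: Simp_def I0_def\<close>)
  then show ?thesis using z by (simp add: Simp_def)
qed

lemma finite_I0: "finite I0" by (simp add: I0_def)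

lemma L_supp: assumes "J \<subseteq> I0" "\<forall>q. q \<notin> J \<longrightarrow> z q = 0" shows "L z = (\<Sum>q\<in>J. z q *\<^sub>R vtx q)"
  unfolding L_def by (rule sum.mono_neutral_right[OF finite_I0 assms(1)]) (use assms(2) in auto)

lemma comb_conv:
  assumes "J \<subseteq> I0"
  shows "(\<exists>u. (\<forall>y\<in>vtx`J. Q (u y)) \<and> sum u (vtx`J) = 1 \<and> (\<Sum>y\<in>vtx`J. u y *\<^sub>R y) = x) \<longleftrightarrow>
         (\<exists>z. (\<forall>q. q \<notin> J \<longrightarrow> z q = 0) \<and> (\<forall>q\<in>J. Q (z q)) \<and> sum z J = 1 \<and> L z = x)"
proof -
  have inj: "inj_on vtx J" using vtx_inj assms inj_on_subset by blast
  show ?thesis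
  proof
    assume "\<exists>u. (\<forall>y\<in>vtx`J. Q (u y)) \<and> sum u (vtx`J) = 1 \<and> (\<Sum>y\<in>vtx`J. u y *\<^sub>R y) = x"
    then obtain u where u: "\<forall>y\<in>vtx`J. Q (u y)" "sum u (vtx`J) = 1" "(\<Sum>y\<in>vtx`J. u y *\<^sub>R y) = x" by blast
    define z where "z q = (if q \<in> J then u (vtx q) else 0)" for q
    have "sum z J = sum (u \<circ> vtx) J" by (intro sum.cong) (auto simp: z_def)
    also have "... = 1" using u(2) sum.reindex[OF inj, of u] by simp
    finally have 1: "sum z J = 1" .
    have "L z = (\<Sum>q\<in>J. z q *\<^sub>R vtx q)" using assms by (intro L_supp) (auto simp: z_def)
    also have "... = (\<Sum>q\<in>J. u (vtx q) *\<^sub>R vtx q)" by (intro sum.cong) (auto simp: z_def)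
    also have "... = x" using u(3) sum.reindex[OF inj, of "\<lambda>y. u y *\<^sub>R y"] by simp
    finally show "\<exists>z. (\<forall>q. q \<notin> J \<longrightarrow> z q = 0) \<and> (\<forall>q\<in>J. Q (z q)) \<and> sum z J = 1 \<and> L z = x"
      using 1 u(1) by (intro exI[of _ z]) (auto simp: z_def)
  next
    assume "\<exists>z. (\<forall>q. q \<notin> J \<longrightarrow> z q = 0) \<and> (\<forall>q\<in>J. Q (z q)) \<and> sum z J = 1 \<and> L z = x"
    then obtain z where z: "\<forall>q. q \<notin> J \<longrightarrow> z q = 0" "\<forall>q\<in>J. Q (z q)" "sum z J = 1" "L z = x" by blast
    define u where "u y = z (inv_into J vtx y)" for y
    have uv: "u (vtx q) = z q" if "q \<in> J" for q using inj that by (simp add: u_def)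
    have "sum u (vtx`J) = sum (u \<circ> vtx) J" using sum.reindex[OF inj] by simp
    also have "... = sum z J" using uv by (intro sum.cong) auto
    also have "... = 1" using z(3) by simp
    finally have 1: "sum u (vtx`J) = 1" .
    have "(\<Sum>y\<in>vtx`J. u y *\<^sub>R y) = (\<Sum>q\<in>J. u (vtx q) *\<^sub>R vtx q)" using sum.reindex[OF inj] by simp
    also have "... = (\<Sum>q\<in>J. z q *\<^sub>R vtx q)" using uv by (intro sum.cong) auto
    also have "... = x" using z(1,4) L_supp[OF assms] by simp
    finally show "\<exists>u. (\<forall>y\<in>vtx`J. Q (u y)) \<and> sum u (vtx`J) = 1 \<and> (\<Sum>y\<in>vtx`J. u y *\<^sub>R y) = x"
      using 1 z(2) uv by (intro exI[of _ u]) auto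
  qed
qed

lemma hull_eq: assumes "J \<subseteq> I0" shows "convex hull (vtx`J) = L ` Simp J"
proof -
  have fin: "finite (vtx`J)" using assms finite_I0 finite_subset by blast
  show ?thesis
  proof (rule set_eqI)
    fix x
    have "x \<in> convex hull (vtx`J) \<longleftrightarrow> (\<exists>u. (\<forall>y\<in>vtx`J. 0 \<le> u y) \<and> sum u (vtx`J) = 1 \<and> (\<Sum>y\<in>vtx`J. u y *\<^sub>R y) = x)"
      unfolding convex_hull_finite[OF fin] by simp
    also have "... \<longleftrightarrow> (\<exists>z. (\<forall>q. q \<notin> J \<longrightarrow> z q = 0) \<and> (\<forall>q\<in>J. 0 \<le> z q) \<and> sum z J = 1 \<and> L z = x)"
      by (rule comb_conv[OF assms])
    also have "... \<longleftrightarrow> x \<in> L ` Simp J" unfolding Simp_def image_def by blast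
    finally show "x \<in> convex hull (vtx`J) \<longleftrightarrow> x \<in> L ` Simp J" .
  qed
qed

definition "Sp = {z \<in> Simp I0. (\<forall>i<k. \<exists>t<3. z (i,t) = 0) \<and> (\<exists>i<k. z (i,0) = 0 \<or> z (i,1) = 0)}"
definition "mm x i = min (x $ a i) (x $ b i)"

lemma Simp_I0_nonneg: "z \<in> Simp I0 \<Longrightarrow> i < k \<Longrightarrow> t < 3 \<Longrightarrow> 0 \<le> z (i,t)"
  by (auto simp: Simp_def I0_def)
lemma Simp_I0_supp: "z \<in> Simp I0 \<Longrightarrow> \<not> (i < k \<and> t < 3) \<Longrightarrow> z (i,t) = 0"
  by (auto simp: Simp_def I0_def)

lemma Wt_nonneg: "z \<in> Simp I0 \<Longrightarrow> 0 \<le> Wt z"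
  unfolding Wt_def by (intro sum_nonneg) (auto intro: Simp_I0_nonneg)

lemma L_nonneg: assumes "z \<in> Simp I0" shows "0 \<le> L z $ j"
  unfolding L_nth using assms s_pos r_s
  by (intro sum_nonneg add_nonneg_nonneg mult_nonneg_nonneg) (auto intro: Simp_I0_nonneg)

lemma mm_nonneg: "z \<in> Simp I0 \<Longrightarrow> 0 \<le> mm (L z) i"
  by (simp add: mm_def L_nonneg)

lemma w_form:
  assumes z: "z \<in> Simp I0" "\<forall>i<k. \<exists>t<3. z (i,t) = 0" and i: "i < k"
  shows "s * z (i,2) = max 0 (r * Wt z - mm (L z) i)"
proof -
  have nn: "0 \<le> z (i,0)" "0 \<le> z (i,1)" "0 \<le> z (i,2)" using z(1) i by (auto intro: Simp_I0_nonneg)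
  have m: "mm (L z) i = min (z (i,0)) (z (i,1)) + r * Wt z - s * z (i,2)"
    using i by (simp add: mm_def L_a L_b min_add_distrib_right min_diff_distrib_left)
  obtain t where t: "t < 3" "z (i,t) = 0" using z(2) i by blast
  show ?thesis
  proof (cases "z (i,2) = 0")
    case True
    then show ?thesis using m nn by (auto simp: max_def min_def)
  next
    case False
    then have "t \<noteq> 2" using t by auto
    then have "t = 0 \<or> t = 1" using t by auto
    then have "min (z (i,0)) (z (i,1)) = 0" using t nn by (auto simp: min_def)
    then show ?thesis using m nn False s_pos by (simp add: max_def)
  qed
qed

lemma W_fix:
  assumes z: "z \<in> Simp I0" "\<forall>i<k. \<exists>t<3. z (i,t) = 0"
  shows "s * Wt z = (\<Sum>i<k. max 0 (r * Wt z - mm (L z) i))"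
proof -
  have "s * Wt z = (\<Sum>i<k. s * z (i,2))" by (simp add: Wt_def sum_distrib_left)
  also have "... = (\<Sum>i<k. max 0 (r * Wt z - mm (L z) i))" using w_form[OF z] by (intro sum.cong) auto
  finally show ?thesis .
qed

lemma fix_uniq:
  fixes W W' :: real and m :: "nat \<Rightarrow> real"
  assumes m: "\<forall>i<k. 0 < m i" and W: "0 < W" "0 < W'"
    and f: "s * W = (\<Sum>i<k. max 0 (r * W - m i))" and f': "s * W' = (\<Sum>i<k. max 0 (r * W' - m i))"
  shows "W = W'"
proof -
  have main: False if lt: "V < V'" and V: "0 < V" "0 < V'"
    and g: "s * V = (\<Sum>i<k. max 0 (r * V - m i))" and g': "s * V' = (\<Sum>i<k. max 0 (r * V' - m i))" for V V'
  proof -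
    have le: "max 0 (r * V - m i) * V' \<le> max 0 (r * V' - m i) * V" if "i < k" for i
    proof (cases "r * V - m i > 0")
      case True
      have "m i * V \<le> m i * V'" using m that lt by simp
      then have "(r * V - m i) * V' \<le> (r * V' - m i) * V" by (simp add: algebra_simps)
      moreover have "(r * V' - m i) * V \<le> max 0 (r * V' - m i) * V" using V by (simp add: mult_right_mono)
      ultimately show ?thesis using True by simp
    next
      case False
      then show ?thesis using V by (simp add: max_def)
    qed
    have "0 < s * V" using s_pos V by simp
    then obtain i0 where i0: "i0 < k" "max 0 (r * V - m i0) > 0" using g
      by (metis (no_types, lifting) lessThan_iff not_less sum_nonpos max.cobounded1 order.trans)
    have lt0: "max 0 (r * V - m i0) * V' < max 0 (r * V' - m i0) * V"
    proof -
      have "m i0 * V < m i0 * V'" using m i0 lt by simp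
      then have "(r * V - m i0) * V' < (r * V' - m i0) * V" by (simp add: algebra_simps)
      moreover have "(r * V' - m i0) * V \<le> max 0 (r * V' - m i0) * V" using V by (simp add: mult_right_mono)
      moreover have "r * V - m i0 > 0" using i0 by (simp add: max_def split: if_splits)
      ultimately show ?thesis by simp
    qed
    have "(\<Sum>i<k. max 0 (r * V - m i) * V') < (\<Sum>i<k. max 0 (r * V' - m i) * V)"
      by (rule sum_strict_mono_ex1) (use le lt0 i0 in \<open>auto intro!: bexI[of _ i0]\<close>)
    then have "s * V * V' < s * V' * V" by (simp add: g g' sum_distrib_right)
    then show False by (simp add: algebra_simps)
  qed
  show ?thesis
  proof (cases W W' rule: linorder_cases)
    case less then show ?thesis using main[OF less W f f'] by simp
  next
    case greater then show ?thesis using main[OF greater W(2,1) f' f] by simp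
  qed simp
qed

lemma Sp_inj: assumes z: "z \<in> Sp" and z': "z' \<in> Sp" and eq: "L z = L z'" shows "z = z'"
proof -
  define x where "x = L z"
  have zS: "z \<in> Simp I0" "\<forall>i<k. \<exists>t<3. z (i,t) = 0" and z'S: "z' \<in> Simp I0" "\<forall>i<k. \<exists>t<3. z' (i,t) = 0"
    using z z' by (auto simp: Sp_def)
  have f: "s * Wt z = (\<Sum>i<k. max 0 (r * Wt z - mm x i))" using W_fix[OF zS] by (simp add: x_def)
  have f': "s * Wt z' = (\<Sum>i<k. max 0 (r * Wt z' - mm x i))" using W_fix[OF z'S] eq by (simp add: x_def)
  have W0: "0 \<le> Wt z" "0 \<le> Wt z'" using zS z'S Wt_nonneg by auto
  have WW: "Wt z = Wt z'"
  proof (cases "\<exists>i0<k. mm x i0 = 0")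
    case True
    then obtain i0 where i0: "i0 < k" "mm x i0 = 0" by blast
    have zero: "V = 0" if V: "0 \<le> V" and g: "s * V = (\<Sum>i<k. max 0 (r * V - mm x i))" for V
    proof -
      have "max 0 (r * V - mm x i0) \<le> (\<Sum>i<k. max 0 (r * V - mm x i))"
        by (rule member_le_sum) (use i0 in auto)
      then have "r * V \<le> s * V" using i0 g by simp
      then have "s * V \<le> 0" using r_s by (simp add: mult.commute)
      then show ?thesis using V s_pos by (simp add: mult_le_0_iff)
    qed
    show ?thesis using zero[OF W0(1) f] zero[OF W0(2) f'] by simp
  next
    case False
    have "\<forall>i<k. 0 \<le> mm x i" using mm_nonneg[OF zS(1)] unfolding x_def by blast
    then have mpos: "\<forall>i<k. 0 < mm x i" using False by (auto simp: order_le_less)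
    have Wpos: "0 < Wt y" if y: "y \<in> Sp" "L y = x" for y
    proof (rule ccontr)
      assume "\<not> 0 < Wt y"
      moreover have "0 \<le> Wt y" using Wt_nonneg y by (auto simp: Sp_def)
      ultimately have W0: "Wt y = 0" by simp
      obtain i0 where i0: "i0 < k" "y (i0,0) = 0 \<or> y (i0,1) = 0" using y by (auto simp: Sp_def)
      have nn: "0 \<le> y (i0,0)" "0 \<le> y (i0,1)" "0 \<le> y (i0,2)" using y i0 by (auto simp: Sp_def intro: Simp_I0_nonneg)
      have "mm x i0 = min (y (i0,0)) (y (i0,1)) + r * Wt y - s * y (i0,2)"
        using i0 y(2)[symmetric] by (simp add: mm_def L_a L_b min_add_distrib_right min_diff_distrib_left)
      then have "mm x i0 \<le> 0" using W0 i0 nn s_pos by (auto simp: min_def)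
      then show False using mpos i0 by force
    qed
    have p1: "0 < Wt z" by (rule Wpos[OF z]) (simp add: x_def)
    have p2: "0 < Wt z'" by (rule Wpos[OF z']) (simp add: x_def eq)
    show ?thesis by (rule fix_uniq[OF mpos p1 p2 f f'])
  qed
  show ?thesis
  proof (rule ext, clarify)
    fix i t
    show "z (i,t) = z' (i,t)"
    proof (cases "i < k \<and> t < 3")
      case False then show ?thesis using Simp_I0_supp[OF zS(1) False] Simp_I0_supp[OF z'S(1) False] by simp
    next
      case True
      have w: "z (i,2) = z' (i,2)"
      proof -
        have "s * z (i,2) = s * z' (i,2)" using w_form[OF zS, of i] w_form[OF z'S, of i] True WW eq by simp
        then show ?thesis using s_pos by simp
      qed
      have ik: "i < k" using True by simp
      have "t = 0 \<or> t = 1 \<or> t = 2" using True by auto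
      moreover have "z (i,0) = z' (i,0)" using L_a[OF ik, of z] L_a[OF ik, of z'] eq WW w by simp
      moreover have "z (i,1) = z' (i,1)" using L_b[OF ik, of z] L_b[OF ik, of z'] eq WW w by simp
      ultimately show ?thesis using w by (elim disjE) simp_all
    qed
  qed
qed

definition "Jt t = Jc (\<lambda>_. t)"
lemma Jt_sub: "Jt t \<subseteq> I0" by (auto simp: Jt_def Jc_def)
lemma Jc_sub: "Jc c \<subseteq> I0" by (auto simp: Jc_def)

lemma Simp_sub_I0: assumes "J \<subseteq> I0" "z \<in> Simp J" shows "z \<in> Simp I0"
  using assms Simp_I0[OF assms] unfolding Simp_def by auto

lemma Wt_supp2: "(\<forall>i<k. z (i,2) = 0) \<Longrightarrow> Wt z = 0" by (simp add: Wt_def)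

lemma ex3: assumes "P 0 \<or> P 1 \<or> P 2" shows "\<exists>t<(3::nat). P t"
proof -
  have "(0::nat) < 3" "(1::nat) < 3" "(2::nat) < 3" by simp_all
  then show ?thesis using assms by blast
qed

lemma exist:
  assumes z0: "z0 \<in> Simp (Jt 2)"
  shows "\<exists>z\<in>Sp. L z = L z0"
proof -
  define x where "x = L z0"
  have z0I: "z0 \<in> Simp I0" using Simp_sub_I0[OF Jt_sub z0] .
  have z02: "z0 (i,2) = 0" for i using z0 by (auto simp: Simp_def Jt_def Jc_def)
  have W0: "Wt z0 = 0" using z02 by (simp add: Wt_def)
  have xa: "x $ a i = z0 (i,0)" and xb: "x $ b i = z0 (i,1)" if "i < k" for i
    using that L_a L_b W0 z02 by (simp_all add: x_def)
  have nn: "0 \<le> z0 (i,0)" "0 \<le> z0 (i,1)" if "i < k" for i using that z0I Simp_I0_nonneg by auto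
  have tot: "(\<Sum>i<k. z0 (i,0) + z0 (i,1)) = 1"
    using Simp_I0[OF Jt_sub z0] by (simp add: sum_I0 z02)
  show ?thesis
  proof (cases "\<exists>i0<k. mm x i0 = 0")
    case True
    then obtain i0 where i0: "i0 < k" "mm x i0 = 0" by blast
    have "\<forall>i<k. \<exists>t<3. z0 (i,t) = 0" using z02 ex3[of "\<lambda>t. z0 (_,t) = 0"] by blast
    moreover have "z0 (i0,0) = 0 \<or> z0 (i0,1) = 0" using i0 xa xb by (auto simp: mm_def min_def split: if_splits)
    ultimately have "z0 \<in> Sp" unfolding Sp_def using z0I i0 by blast
    then show ?thesis by (auto simp: x_def)
  next
    case False
    have mpos: "0 < mm x i" if "i < k" for i
      using False that nn xa xb by (force simp: mm_def min_def)
    define f where "f W = (\<Sum>i<k. max 0 (r * W - mm x i)) - s * W" for W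
    define mu where "mu = Min (mm x ` {..<k})"
    have k0: "{..<k} \<noteq> {}" using k2 by (auto simp: lessThan_empty_iff)
    have mu_pos: "0 < mu" unfolding mu_def using mpos k0 by (subst Min_gr_iff) auto
    have mu_le: "mu \<le> mm x i" if "i < k" for i unfolding mu_def using that by (intro Min_le) auto
    have r_pos: "0 < r" using s_pos r_s by simp
    define W0 where "W0 = mu / r"
    have W0_pos: "0 < W0" using mu_pos r_pos by (simp add: W0_def)
    have fW0: "f W0 \<le> 0"
    proof -
      have "max 0 (r * W0 - mm x i) = 0" if "i < k" for i
        using mu_le[OF that] r_pos by (simp add: W0_def max_def)
      then show ?thesis using W0_pos s_pos by (simp add: f_def)
    qed
    define W1 where "W1 = max 1 W0"
    have msum: "(\<Sum>i<k. mm x i) \<le> 1/2"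
    proof -
      have "(\<Sum>i<k. mm x i) \<le> (\<Sum>i<k. (z0 (i,0) + z0 (i,1)) / 2)"
        by (intro sum_mono) (simp add: mm_def xa xb min_def)
      also have "... = 1/2" using tot by (simp add: sum_divide_distrib[symmetric])
      finally show ?thesis .
    qed
    have fW1: "0 \<le> f W1"
    proof -
      have "(\<Sum>i<k. r * W1 - mm x i) \<le> (\<Sum>i<k. max 0 (r * W1 - mm x i))"
        by (intro sum_mono) simp
      moreover have "(\<Sum>i<k. r * W1 - mm x i) = k * r * W1 - (\<Sum>i<k. mm x i)"
        by (simp add: sum_subtractf)
      moreover have "k * r * W1 - s * W1 = W1 / 2"
        using s_eq r_s by (simp add: algebra_simps)
      moreover have "1 \<le> W1" by (simp add: W1_def)
      ultimately show ?thesis using msum unfolding f_def by linarith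
    qed
    have cont: "continuous_on {W0..W1} f"
      unfolding f_def by (intro continuous_intros continuous_on_max)
    obtain W where W: "W0 \<le> W" "W \<le> W1" "f W = 0"
      using IVT'[of f W0 0 W1, OF fW0 fW1 _ cont] by (auto simp: W1_def)
    have Wpos: "0 < W" using W W0_pos by simp
    have fixW: "(\<Sum>i<k. max 0 (r * W - mm x i)) = s * W" using W(3) by (simp add: f_def)
    define M where "M i = max 0 (r * W - mm x i)" for i
    define z :: "nat \<times> nat \<Rightarrow> real" where "z q = (if fst q < k then (if snd q = 0 then x $ a (fst q) - r * W + M (fst q)
       else if snd q = 1 then x $ b (fst q) - r * W + M (fst q) else if snd q = 2 then M (fst q) / s else 0) else 0)" for q
    have z0': "z (i,0) = x $ a i - r * W + M i" "z (i,1) = x $ b i - r * W + M i" "z (i,2) = M i / s"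
      "z (i,Suc 0) = x $ b i - r * W + M i"
      if "i < k" for i using that by (simp_all add: z_def)
    have Wz: "Wt z = W"
    proof -
      have "Wt z = (\<Sum>i<k. M i / s)" unfolding Wt_def by (intro sum.cong) (auto simp: z0')
      also have "... = W" using fixW s_pos by (simp add: M_def sum_divide_distrib[symmetric])
      finally show ?thesis .
    qed
    have Mge: "r * W - mm x i \<le> M i" "0 \<le> M i" for i by (simp_all add: M_def)
    have zsupp: "\<forall>q. q \<notin> I0 \<longrightarrow> z q = 0" by (auto simp: z_def I0_def)
    have znn: "0 \<le> z q" if qI: "q \<in> I0" for q
    proof -
      obtain i t where q: "q = (i,t)" "i < k" "t < 3" using qI by (auto simp: I0_def)
      have "t = 0 \<or> t = 1 \<or> t = 2" using q by auto
      then show ?thesis using q Mge[of i] s_pos z0'[OF q(2)]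
        by (auto simp: mm_def min_def split: if_splits)
    qed
    have zsum: "sum z I0 = 1"
    proof -
      have "sum z I0 = (\<Sum>i<k. (z0 (i,0) + z0 (i,1)) - 2 * r * W + 2 * M i + M i / s)"
        unfolding sum_I0 by (intro sum.cong) (auto simp: z0' xa xb)
      also have "... = 1 - 2 * k * r * W + 2 * s * W + W"
        using tot fixW s_pos
        by (simp add: sum.distrib sum_subtractf sum_divide_distrib[symmetric] sum_distrib_left[symmetric] M_def)
      also have "... = 1" using s_eq r_s by (simp add: algebra_simps)
      finally show ?thesis .
    qed
    have zI: "z \<in> Simp I0" using zsupp znn zsum by (auto simp: Simp_def)
    have zero_i: "z (i,0) = 0 \<or> z (i,1) = 0" if "i < k" "0 < M i" for i
    proof -
      have "M i = r * W - mm x i" using that by (simp add: M_def max_def split: if_splits)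
      then show ?thesis using that by (auto simp: z0' mm_def min_def)
    qed
    have per: "\<forall>i<k. \<exists>t<3. z (i,t) = 0"
    proof (intro allI impI)
      fix i assume i: "i < k"
      show "\<exists>t<3. z (i,t) = 0"
      proof (cases "0 < M i")
        case True then show ?thesis using zero_i[OF i] ex3[of "\<lambda>t. z (i,t) = 0"] by blast
      next
        case False then have "M i = 0" using Mge[of i] by simp
        then show ?thesis using i by (intro exI[of _ 2]) (simp add: z0')
      qed
    qed
    have "\<exists>i<k. 0 < M i"
    proof (rule ccontr)
      assume "\<not> (\<exists>i<k. 0 < M i)"
      then have "\<forall>i<k. M i = 0" using Mge by (metis order_le_less)
      then have "(\<Sum>i<k. M i) = 0" by simp
      then have "s * W = 0" using fixW by (simp add: M_def)
      then show False using s_pos Wpos by simp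
    qed
    then have ex: "\<exists>i<k. z (i,0) = 0 \<or> z (i,1) = 0" using zero_i by blast
    have zSp: "z \<in> Sp" using zI per ex by (simp add: Sp_def)
    have sz2: "s * z (i,2) = M i" if "i < k" for i using s_pos that by (simp add: z0')
    have La: "L z $ a i = x $ a i" if i: "i < k" for i
    proof -
      have "L z $ a i = z (i,0) + r * Wt z - s * z (i,2)" by (rule L_a[OF i])
      also have "... = x $ a i" unfolding sz2[OF i] Wz z0'(1)[OF i] by simp
      finally show ?thesis .
    qed
    have Lb: "L z $ b i = x $ b i" if i: "i < k" for i
    proof -
      have "L z $ b i = z (i,1) + r * Wt z - s * z (i,2)" by (rule L_b[OF i])
      also have "... = x $ b i" unfolding sz2[OF i] Wz z0'(2)[OF i] by simp
      finally show ?thesis .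
    qed
    have "L z = x" unfolding vec_eq_ab using La Lb by simp
    then show ?thesis using zSp by (auto simp: x_def)
  qed
qed

definition R :: "(nat \<times> nat \<Rightarrow> real) \<Rightarrow> nat \<times> nat \<Rightarrow> real" where
  "R z q = (if snd q = 0 then z (fst q, 1) else if snd q = 1 then z (fst q, 2)
            else if snd q = 2 then z (fst q, 0) else 0)"
definition tvx :: "nat \<times> nat \<Rightarrow> real^'n" where "tvx q = (if snd q = 0 then vtx (fst q, 2) else if snd q = 1 then vtx (fst q, 0) else vtx (fst q, 1))"
definition "zeta x = (THE z. z \<in> Sp \<and> L z = x)"
definition "sig x = L (R (zeta x))"
definition "CC = {c \<in> {..<k} \<rightarrow>\<^sub>E {..<3::nat}. \<exists>i<k. \<exists>j<k. c i \<noteq> c j}"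
definition "Om = (\<Union>c\<in>CC. Simp (Jc c))"
definition "bd J = {z \<in> Simp J. \<exists>q\<in>J. z q = 0}"
definition "pos J = {z \<in> Simp J. \<forall>q\<in>J. 0 < z q}"
definition dl :: "nat \<times> nat \<Rightarrow> nat \<times> nat \<Rightarrow> real" where "dl q = (\<lambda>q'. if q' = q then 1 else (0::real))"

lemma R_simps: "R z (i,0) = z (i,1)" "R z (i,Suc 0) = z (i,2)" "R z (i,1) = z (i,2)" "R z (i,2) = z (i,0)"
  by (simp_all add: R_def)

lemma LR: "L (R z) = (\<Sum>q\<in>I0. z q *\<^sub>R tvx q)"
  unfolding L_def sum_I0 by (intro sum.cong) (simp_all add: R_def tvx_def)

lemma L_dl: "q \<in> I0 \<Longrightarrow> L (dl q) = vtx q"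
proof -
  assume q: "q \<in> I0"
  have "L (dl q) = (\<Sum>qa\<in>I0. if qa = q then vtx qa else 0)" unfolding L_def by (intro sum.cong) (auto simp: dl_def)
  then show ?thesis using q sum.delta[OF finite_I0, of q] by simp
qed

lemma LR_dl: "q \<in> I0 \<Longrightarrow> L (R (dl q)) = tvx q"
proof -
  assume q: "q \<in> I0"
  have "L (R (dl q)) = (\<Sum>qa\<in>I0. if qa = q then tvx qa else 0)" unfolding LR by (intro sum.cong) (auto simp: dl_def)
  then show ?thesis using q sum.delta[OF finite_I0, of q] by simp
qed

lemma zeta_L: "z \<in> Sp \<Longrightarrow> zeta (L z) = z"
  unfolding zeta_def by (rule the1_equality) (auto intro: Sp_inj)

lemma sig_L: "z \<in> Sp \<Longrightarrow> sig (L z) = L (R z)"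
  by (simp add: sig_def zeta_L)

lemma Simp_iff: assumes "J \<subseteq> I0"
  shows "z \<in> Simp J \<longleftrightarrow> (\<forall>q. q \<notin> J \<longrightarrow> z q = 0) \<and> (\<forall>q\<in>J. 0 \<le> z q) \<and> sum z I0 = 1"
proof -
  have "(\<forall>q. q \<notin> J \<longrightarrow> z q = 0) \<Longrightarrow> sum z I0 = sum z J"
    by (rule sum.mono_neutral_right[OF finite_I0 assms]) auto
  then show ?thesis unfolding Simp_def by auto
qed

lemma Jc_mem: "(i,t) \<in> Jc c \<longleftrightarrow> i < k \<and> t < 3 \<and> t \<noteq> c i"
  by (auto simp: Jc_def I0_def)
lemma Jt_mem: "(i,t) \<in> Jt u \<longleftrightarrow> i < k \<and> t < 3 \<and> t \<noteq> u"
  by (auto simp: Jt_def Jc_def I0_def)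

lemma Simp_JcI: assumes "z \<in> Simp I0" "\<forall>i<k. z (i, c i) = 0"
  shows "z \<in> Simp (Jc c)"
  unfolding Simp_iff[OF Jc_sub] using assms Simp_I0_supp[OF assms(1)] Simp_I0_nonneg[OF assms(1)]
    Simp_I0[of I0 z] 
  by (auto simp: Jc_mem)

lemma Simp_JcD: assumes "z \<in> Simp (Jc c)" "i < k" "c i < 3" shows "z (i, c i) = 0"
  using assms by (auto simp: Simp_def Jc_mem)

lemma Simp_Jc_Sp: assumes "\<forall>i<k. c i < 3" "\<exists>i<k. c i \<noteq> 2"
  shows "Simp (Jc c) \<subseteq> Sp"
proof
  fix z assume z: "z \<in> Simp (Jc c)"
  have zI: "z \<in> Simp I0" using Simp_sub_I0[OF Jc_sub z] .
  have "\<forall>i<k. \<exists>t<3. z (i,t) = 0" using Simp_JcD[OF z] assms(1) by blast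
  moreover obtain i where i: "i < k" "c i \<noteq> 2" using assms(2) by blast
  then have "c i = 0 \<or> c i = 1" using assms(1) by force
  then have "z (i,0) = 0 \<or> z (i,1) = 0" using Simp_JcD[OF z i(1)] assms(1) i by force
  ultimately show "z \<in> Sp" using zI i by (auto simp: Sp_def)
qed

lemma CC_lt: "c \<in> CC \<Longrightarrow> \<forall>i<k. c i < 3" by (auto simp: CC_def PiE_def Pi_def)
lemma CC_ne2: "c \<in> CC \<Longrightarrow> \<exists>i<k. c i \<noteq> 2" by (auto simp: CC_def)

lemma Om_Sp: "Om \<subseteq> Sp"
  unfolding Om_def using Simp_Jc_Sp CC_lt CC_ne2 by blast

lemma L_lin: "L (\<lambda>q. u * z q + v * z' q) = u *\<^sub>R L z + v *\<^sub>R L z'"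
  unfolding L_def by (simp add: sum.distrib scaleR_add_left scaleR_sum_right)

lemma R_Simp: assumes "z \<in> Simp (Jc c)" "\<forall>i<k. c i < 3"
  shows "R z \<in> Simp (Jc (\<lambda>i. (c i + 2) mod 3))"
proof -
  have zI: "z \<in> Simp I0" using Simp_sub_I0[OF Jc_sub assms(1)] .
  have "\<forall>i<k. R z (i, (c i + 2) mod 3) = 0"
  proof (intro allI impI)
    fix i assume i: "i < k"
    have "c i = 0 \<or> c i = 1 \<or> c i = 2" using assms(2) i by force
    then show "R z (i, (c i + 2) mod 3) = 0" using Simp_JcD[OF assms(1) i] assms(2) i
      by (auto simp: R_def)
  qed
  moreover have "R z \<in> Simp I0"
  proof -
    have "sum (R z) I0 = sum z I0" unfolding sum_I0 by (intro sum.cong) (auto simp: R_def)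
    moreover have "R z q = 0" if "q \<notin> I0" for q
      using that Simp_I0_supp[OF zI] by (cases q) (auto simp: R_def I0_def)
    moreover have "0 \<le> R z q" if "q \<in> I0" for q
      using that Simp_I0_nonneg[OF zI] by (cases q) (auto simp: R_def I0_def)
    ultimately show ?thesis using Simp_I0[OF _ zI] unfolding Simp_iff[OF order_refl] by auto
  qed
  ultimately show ?thesis by (intro Simp_JcI)
qed

lemma R3: assumes "z \<in> Simp I0" shows "R (R (R z)) = z"
proof (rule ext, clarify)
  fix i t
  show "R (R (R z)) (i,t) = z (i,t)"
    using Simp_I0_supp[OF assms, of i t] by (auto simp: R_def I0_def)
qed

lemma fin_vtx: "J \<subseteq> I0 \<Longrightarrow> finite (vtx ` J)"
  using finite_I0 finite_subset by blast

lemma aff_indep: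
  assumes J: "J \<subseteq> I0" "J \<noteq> {}" and inj: "inj_on L (Simp J)"
  shows "\<not> affine_dependent (vtx ` J)"
proof
  assume "affine_dependent (vtx ` J)"
  then obtain U where U: "sum U (vtx`J) = 0" "\<exists>v\<in>vtx`J. U v \<noteq> 0" "(\<Sum>v\<in>vtx`J. U v *\<^sub>R v) = 0"
    unfolding affine_dependent_explicit_finite[OF fin_vtx[OF J(1)]] by blast
  have injv: "inj_on vtx J" using vtx_inj J(1) inj_on_subset by blast
  have finJ: "finite J" using J(1) finite_I0 finite_subset by blast
  define dd where "dd q = (if q \<in> J then U (vtx q) else 0)" for q
  have s1: "sum dd J = 0"
  proof -
    have "sum dd J = sum (U \<circ> vtx) J" by (intro sum.cong) (auto simp: dd_def)
    then show ?thesis using U(1) sum.reindex[OF injv, of U] by simp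
  qed
  have s2: "(\<Sum>q\<in>J. dd q *\<^sub>R vtx q) = 0"
  proof -
    have "(\<Sum>q\<in>J. dd q *\<^sub>R vtx q) = (\<Sum>q\<in>J. U (vtx q) *\<^sub>R vtx q)" by (intro sum.cong) (auto simp: dd_def)
    then show ?thesis using U(3) sum.reindex[OF injv, of "\<lambda>v. U v *\<^sub>R v"] by simp
  qed
  obtain q0 where q0: "q0 \<in> J" "dd q0 \<noteq> 0" using U(2) by (auto simp: dd_def)
  define n where "n = real (card J)"
  have npos: "0 < n" using finJ J(2) by (simp add: n_def card_gt_0_iff)
  define Mx where "Mx = (\<Sum>q\<in>J. \<bar>dd q\<bar>)"
  have dle: "\<bar>dd q\<bar> \<le> Mx" if "q \<in> J" for q unfolding Mx_def by (rule member_le_sum) (use that finJ in auto)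
  have Mpos: "0 < Mx" using dle[OF q0(1)] q0(2) by simp
  define ep where "ep = 1 / (2 * n * Mx)"
  have eppos: "0 < ep" using npos Mpos by (simp add: ep_def)
  define z0 where "z0 q = (if q \<in> J then 1 / n else 0)" for q
  define z1 where "z1 q = z0 q + ep * dd q" for q
  have z0S: "z0 \<in> Simp J" using npos by (auto simp: Simp_def z0_def n_def)
  have z1S: "z1 \<in> Simp J"
  proof -
    have "0 \<le> z1 q" if q: "q \<in> J" for q
    proof -
      have "ep * \<bar>dd q\<bar> \<le> ep * Mx" using dle[OF q] eppos by (simp add: mult_left_mono)
      also have "... = 1 / (2 * n)" using Mpos by (simp add: ep_def)
      finally have "ep * \<bar>dd q\<bar> \<le> 1 / (2 * n)" .
      moreover have "ep * (- \<bar>dd q\<bar>) \<le> ep * dd q" using eppos by (intro mult_left_mono) auto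
      moreover have "1 / (2 * n) \<le> 1 / n" using npos by (simp add: field_simps)
      ultimately show ?thesis using q npos by (simp add: z1_def z0_def)
    qed
    moreover have "sum z1 J = 1"
      using z0S s1 by (simp add: z1_def sum.distrib sum_distrib_left[symmetric] Simp_def)
    moreover have "z1 q = 0" if "q \<notin> J" for q using that by (simp add: z1_def z0_def dd_def)
    ultimately show ?thesis unfolding Simp_def by blast
  qed
  have "z1 = (\<lambda>q. 1 * z0 q + ep * dd q)" by (simp add: z1_def fun_eq_iff)
  then have "L z1 = L z0 + ep *\<^sub>R L dd" using L_lin[of 1 z0 ep dd] by simp
  moreover have "L dd = 0" using L_supp[OF J(1), of dd] s2 by (simp add: dd_def)
  ultimately have "L z1 = L z0" by simp
  then have "z1 = z0" using inj z0S z1S by (auto dest: inj_onD)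
  then have "ep * dd q0 = 0" by (metis add_cancel_left_right z1_def)
  then show False using eppos q0 by simp
qed

lemma card_vtx: "J \<subseteq> I0 \<Longrightarrow> card (vtx ` J) = card J"
  using vtx_inj inj_on_subset card_image by blast

lemma relint_eq:
  assumes J: "J \<subseteq> I0" and ind: "\<not> affine_dependent (vtx ` J)"
  shows "rel_interior (convex hull (vtx ` J)) = L ` pos J"
proof (rule set_eqI)
  fix x
  have "x \<in> rel_interior (convex hull (vtx ` J)) \<longleftrightarrow> (\<exists>u. (\<forall>y\<in>vtx`J. 0 < u y) \<and> sum u (vtx`J) = 1 \<and> (\<Sum>y\<in>vtx`J. u y *\<^sub>R y) = x)"
    unfolding rel_interior_convex_hull_explicit[OF ind] by simp
  also have "... \<longleftrightarrow> (\<exists>z. (\<forall>q. q \<notin> J \<longrightarrow> z q = 0) \<and> (\<forall>q\<in>J. 0 < z q) \<and> sum z J = 1 \<and> L z = x)"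
    by (rule comb_conv[OF J])
  also have "... \<longleftrightarrow> x \<in> L ` pos J"
  proof
    assume "\<exists>z. (\<forall>q. q \<notin> J \<longrightarrow> z q = 0) \<and> (\<forall>q\<in>J. 0 < z q) \<and> sum z J = 1 \<and> L z = x"
    then obtain z where z: "\<forall>q. q \<notin> J \<longrightarrow> z q = 0" "\<forall>q\<in>J. 0 < z q" "sum z J = 1" "L z = x" by blast
    then have "z \<in> pos J" unfolding pos_def Simp_def by (simp add: less_imp_le)
    then show "x \<in> L ` pos J" using z(4) by blast
  next
    assume "x \<in> L ` pos J"
    then obtain z where "z \<in> pos J" "L z = x" by blast
    then show "\<exists>z. (\<forall>q. q \<notin> J \<longrightarrow> z q = 0) \<and> (\<forall>q\<in>J. 0 < z q) \<and> sum z J = 1 \<and> L z = x"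
      unfolding pos_def Simp_def by blast
  qed
  finally show "x \<in> rel_interior (convex hull (vtx ` J)) \<longleftrightarrow> x \<in> L ` pos J" .
qed

lemma relfr_eq:
  assumes J: "J \<subseteq> I0" and ind: "\<not> affine_dependent (vtx ` J)" and inj: "inj_on L (Simp J)"
  shows "rel_frontier (convex hull (vtx ` J)) = L ` bd J"
proof -
  have cl: "closure (convex hull (vtx ` J)) = convex hull (vtx ` J)"
    by (simp add: closure_closed compact_imp_closed compact_convex_hull finite_imp_compact fin_vtx[OF J])
  have "rel_frontier (convex hull (vtx ` J)) = convex hull (vtx ` J) - rel_interior (convex hull (vtx ` J))"
    by (simp add: rel_frontier_def cl)
  also have "... = L ` Simp J - L ` pos J" unfolding relint_eq[OF J ind] unfolding hull_eq[OF J] ..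
  also have "... = L ` bd J"
  proof (rule set_eqI, rule iffI)
    fix x assume "x \<in> L ` Simp J - L ` pos J"
    then obtain z where z: "z \<in> Simp J" "x = L z" "z \<notin> pos J" by auto
    then obtain q where "q \<in> J" "\<not> 0 < z q" by (auto simp: pos_def)
    then have "q \<in> J" "z q = 0" using z(1) by (auto simp: Simp_def)
    then show "x \<in> L ` bd J" using z by (auto simp: bd_def)
  next
    fix x assume "x \<in> L ` bd J"
    then obtain z q where z: "z \<in> Simp J" "x = L z" "q \<in> J" "z q = 0" by (auto simp: bd_def)
    have "x \<notin> L ` pos J"
    proof
      assume "x \<in> L ` pos J"
      then obtain z' where z': "z' \<in> pos J" "x = L z'" by auto
      then have "z' = z" using inj z by (auto simp: pos_def dest: inj_onD)
      then show False using z' z by (auto simp: pos_def)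
    qed
    then show "x \<in> L ` Simp J - L ` pos J" using z by auto
  qed
  finally show ?thesis .
qed

lemma aff_ext:
  fixes g :: "real^'n \<Rightarrow> real^'n"
  assumes fin: "finite Y" and ne: "Y \<noteq> {}" and ind: "\<not> affine_dependent Y"
  shows "\<exists>h d. linear h \<and> (\<forall>y\<in>Y. h y + d = g y)"
proof -
  obtain y0 where y0: "y0 \<in> Y" using ne by blast
  have dep: "\<not> dependent ((+) (- y0) ` (Y - {y0}))"
    using ind unfolding affine_dependent_iff_dependent2[OF y0] .
  obtain h where h: "linear h" "\<forall>v\<in>(+) (- y0) ` (Y - {y0}). h v = g (v + y0) - g y0"
    using real_vector.linear_independent_extend[OF dep, of "\<lambda>v. g (v + y0) - g y0"] by (elim exE conjE) (rule that)
  have "h y + (g y0 - h y0) = g y" if y: "y \<in> Y" for y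
  proof (cases "y = y0")
    case True then show ?thesis by simp
  next
    case False
    then have "h (- y0 + y) = g y - g y0" using h(2) y by auto
    moreover have "h (- y0 + y) = h y - h y0" using real_vector.linear_diff[OF h(1), of y y0] by simp
    ultimately have "h y - h y0 = g y - g y0" by simp
    then show ?thesis by (metis add_diff_cancel_left' diff_add_cancel add_diff_eq)
  qed
  then show ?thesis using h(1) by blast
qed

lemma LR_affine:
  assumes J: "J \<subseteq> I0" "J \<noteq> {}" and inj: "inj_on L (Simp J)"
  shows "\<exists>h d. linear h \<and> (\<forall>z\<in>Simp J. h (L z) + d = L (R z))"
proof -
  have injv: "inj_on vtx J" using vtx_inj J(1) inj_on_subset by blast
  obtain h d where hd: "linear h" "\<forall>y\<in>vtx`J. h y + d = tvx (inv_into J vtx y)"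
    using aff_ext[OF fin_vtx[OF J(1)] _ aff_indep[OF J inj], where g="\<lambda>y. tvx (inv_into J vtx y)"] J(2) by blast
  have hv: "h (vtx q) + d = tvx q" if "q \<in> J" for q using hd(2) that injv by auto
  have "h (L z) + d = L (R z)" if z: "z \<in> Simp J" for z
  proof -
    have supp: "\<forall>q. q \<notin> J \<longrightarrow> z q = 0" and sz: "sum z J = 1" using z by (auto simp: Simp_def)
    have "L (R z) = (\<Sum>q\<in>J. z q *\<^sub>R tvx q)"
      unfolding LR by (rule sum.mono_neutral_right[OF finite_I0 J(1)]) (use supp in auto)
    also have "... = (\<Sum>q\<in>J. z q *\<^sub>R (h (vtx q) + d))" using hv by (intro sum.cong) auto
    also have "... = h (\<Sum>q\<in>J. z q *\<^sub>R vtx q) + (\<Sum>q\<in>J. z q) *\<^sub>R d"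
      by (simp add: scaleR_add_right sum.distrib real_vector.linear_sum[OF hd(1)] linear_cmul[OF hd(1)] scaleR_sum_left)
    also have "... = h (L z) + d" using L_supp[OF J(1) supp] sz by simp
    finally show ?thesis by simp
  qed
  then show ?thesis using hd(1) by blast
qed

lemma affine_sig:
  assumes J: "J \<subseteq> I0" "J \<noteq> {}" and inj: "inj_on L (Simp J)" and X: "X \<subseteq> Simp J" "X \<subseteq> Sp"
  shows "affine_on (L ` X) sig"
proof -
  obtain h d where hd: "linear h" "\<forall>z\<in>Simp J. h (L z) + d = L (R z)" using LR_affine[OF J inj] by blast
  have "\<forall>x\<in>L ` X. sig x = h x + d" using hd(2) X sig_L by fastforce
  then show ?thesis unfolding affine_on_def using hd(1) by blast
qed

lemma k_pos: "0 < k" using k2 by simp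

lemma inj_Sp: "inj_on L Sp" using Sp_inj by (auto intro: inj_onI)

lemma Simp_Jt_Sp: "t = 0 \<or> t = 1 \<Longrightarrow> Simp (Jt t) \<subseteq> Sp"
  unfolding Jt_def using k_pos by (intro Simp_Jc_Sp) auto

lemma Simp_CC_Sp: "c \<in> CC \<Longrightarrow> Simp (Jc c) \<subseteq> Sp"
  using Simp_Jc_Sp CC_lt CC_ne2 by blast

lemma inj_J2: "inj_on L (Simp (Jt 2))"
proof (rule inj_onI)
  fix z z' assume z: "z \<in> Simp (Jt 2)" and z': "z' \<in> Simp (Jt 2)" and eq: "L z = L z'"
  have zI: "z \<in> Simp I0" "z' \<in> Simp I0" using Simp_sub_I0[OF Jt_sub] z z' by auto
  have z2: "z (i,2) = 0" "z' (i,2) = 0" for i using z z' by (auto simp: Simp_def Jt_mem)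
  have W: "Wt z = 0" "Wt z' = 0" using z2 by (simp_all add: Wt_def)
  show "z = z'"
  proof (rule ext, clarify)
    fix i t
    show "z (i,t) = z' (i,t)"
    proof (cases "i < k \<and> t < 3")
      case False then show ?thesis using Simp_I0_supp[OF zI(1) False] Simp_I0_supp[OF zI(2) False] by simp
    next
      case True
      then have ik: "i < k" by simp
      have "t = 0 \<or> t = 1 \<or> t = 2" using True by auto
      moreover have "z (i,0) = z' (i,0)" using L_a[OF ik, of z] L_a[OF ik, of z'] eq W z2 by simp
      moreover have "z (i,1) = z' (i,1)" using L_b[OF ik, of z] L_b[OF ik, of z'] eq W z2 by simp
      ultimately show ?thesis using z2 by (elim disjE) simp_all
    qed
  qed
qed

lemma inj_Jt: "t < 3 \<Longrightarrow> inj_on L (Simp (Jt t))"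
proof -
  assume "t < 3"
  then have "t = 0 \<or> t = 1 \<or> t = 2" by auto
  then show ?thesis using inj_J2 inj_on_subset[OF inj_Sp Simp_Jt_Sp] by auto
qed

lemma inj_CC: "c \<in> CC \<Longrightarrow> inj_on L (Simp (Jc c))"
  using inj_on_subset[OF inj_Sp Simp_CC_Sp] by blast

lemma Jt_ne: "Jt t \<noteq> {}"
proof -
  have "(0, (t + 1) mod 3) \<in> Jt t" using k_pos by (simp add: Jt_mem) presburger
  then show ?thesis by blast
qed

lemma Jc_ne: "Jc c \<noteq> {}"
proof -
  have "(0, (c 0 + 1) mod 3) \<in> Jc c" using k_pos by (simp add: Jc_mem) presburger
  then show ?thesis by blast
qed

lemma range_e: "range (\<lambda>i. axis i 1) = vtx ` Jt 2"
proof (rule set_eqI)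
  fix y :: "real^'n"
  show "y \<in> range (\<lambda>i. axis i 1) \<longleftrightarrow> y \<in> vtx ` Jt 2"
  proof
    assume "y \<in> range (\<lambda>i. axis i 1)"
    then obtain j where j: "y = axis j 1" by blast
    obtain i where i: "i < k" "j = a i \<or> j = b i" using ab_cover by blast
    show "y \<in> vtx ` Jt 2"
    proof (cases "j = a i")
      case True
      then have "y = vtx (i,0)" using j by (simp add: vtx_def e_def)
      moreover have "(i,0) \<in> Jt 2" using i by (simp add: Jt_mem)
      ultimately show ?thesis by blast
    next
      case False
      then have "y = vtx (i,1)" using j i by (simp add: vtx_def e_def)
      moreover have "(i,1) \<in> Jt 2" using i by (simp add: Jt_mem)
      ultimately show ?thesis by blast
    qed
  next
    assume "y \<in> vtx ` Jt 2"
    then obtain i t where "(i,t) \<in> Jt 2" "y = vtx (i,t)" by auto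
    then show "y \<in> range (\<lambda>i. axis i 1)" by (auto simp: Jt_mem vtx_def e_def)
  qed
qed

lemma proj: assumes z: "z \<in> Simp I0" shows "\<exists>z0\<in>Simp (Jt 2). L z0 = L z"
proof -
  define z0 :: "nat \<times> nat \<Rightarrow> real" where "z0 q = (if fst q < k then (if snd q = 0 then L z $ a (fst q)
      else if snd q = 1 then L z $ b (fst q) else 0) else 0)" for q
  have z0v: "z0 (i,0) = L z $ a i" "z0 (i,1) = L z $ b i" "z0 (i, Suc 0) = L z $ b i" "z0 (i,2) = 0" if "i < k" for i
    using that by (simp_all add: z0_def)
  have W0: "Wt z0 = 0" by (simp add: Wt_def z0v)
  have "sum z0 I0 = (\<Sum>i<k. L z $ a i + L z $ b i)" unfolding sum_I0 by (intro sum.cong) (simp_all add: z0v)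
  also have "... = (\<Sum>i<k. z (i,0) + z (i,1) + z (i,2)) + (2 * k * r - 2 * s - 1) * Wt z"
    by (simp add: L_a L_b sum.distrib sum_subtractf Wt_def algebra_simps sum_distrib_left)
  also have "... = 1" using Simp_I0[OF order_refl z] s_eq r_s by (simp add: sum_I0 algebra_simps)
  finally have s1: "sum z0 I0 = 1" .
  have "z0 \<in> Simp (Jt 2)" unfolding Simp_iff[OF Jt_sub]
  proof (intro conjI allI impI ballI s1)
    fix q assume "q \<notin> Jt 2" then show "z0 q = 0" by (cases q) (auto simp: z0_def Jt_mem)
  next
    fix q assume "q \<in> Jt 2" then show "0 \<le> z0 q" using L_nonneg[OF z] by (cases q) (auto simp: z0_def)
  qed
  moreover have "L z0 = L z" unfolding vec_eq_ab using W0 by (simp add: L_a L_b z0v)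
  ultimately show ?thesis by blast
qed

lemma D0_eq: "convex hull (range (\<lambda>i. axis i 1)) = L ` Sp"
proof -
  have "convex hull (range (\<lambda>i. axis i 1)) = L ` Simp (Jt 2)" unfolding range_e by (rule hull_eq[OF Jt_sub])
  also have "... = L ` Sp"
  proof
    show "L ` Simp (Jt 2) \<subseteq> L ` Sp"
    proof
      fix x assume "x \<in> L ` Simp (Jt 2)"
      then obtain z0 where "z0 \<in> Simp (Jt 2)" "x = L z0" by auto
      then show "x \<in> L ` Sp" using exist[of z0] by (metis image_eqI)
    qed
    show "L ` Sp \<subseteq> L ` Simp (Jt 2)"
    proof
      fix x assume "x \<in> L ` Sp"
      then obtain z where z: "z \<in> Sp" "x = L z" by auto
      then have "z \<in> Simp I0" by (simp add: Sp_def)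
      then obtain z0 where "z0 \<in> Simp (Jt 2)" "L z0 = L z" using proj by blast
      then show "x \<in> L ` Simp (Jt 2)" using z(2) by (metis image_eqI)
    qed
  qed
  finally show ?thesis .
qed

lemma card_Jt: "t < 3 \<Longrightarrow> card (Jt t) = 2 * k"
proof -
  assume t: "t < 3"
  have "Jt t = {..<k} \<times> ({..<3} - {t})" by (auto simp: Jt_mem)
  moreover have "card ({..<3::nat} - {t}) = 2" using t by (simp add: card_Diff_singleton)
  ultimately show ?thesis by (simp add: card_cartesian_product)
qed

lemma Jt_Int: assumes "t < 3" "t' < 3" "t \<noteq> t'" "u < 3" "u \<noteq> t" "u \<noteq> t'"
  shows "Jt t \<inter> Jt t' = {..<k} \<times> {u}"
  using assms by (auto simp: Jt_mem)

definition "Dt t = convex hull (vtx ` Jt t)"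

lemma Dt_eq: "Dt t = L ` Simp (Jt t)" by (simp add: Dt_def hull_eq[OF Jt_sub])
lemma Dt2_eq: "Dt 2 = L ` Sp" using D0_eq range_e by (simp add: Dt_def)

lemma indep_Jt: "t < 3 \<Longrightarrow> \<not> affine_dependent (vtx ` Jt t)"
  using aff_indep[OF Jt_sub Jt_ne inj_Jt] .

lemma bd_Sp: assumes "t < 3" shows "bd (Jt t) \<subseteq> Sp"
proof (cases "t = 2")
  case False
  then have "t = 0 \<or> t = 1" using assms by auto
  then have "Simp (Jt t) \<subseteq> Sp" by (rule Simp_Jt_Sp)
  then show ?thesis by (auto simp: bd_def)
next
  case True
  show ?thesis
  proof
    fix z assume z: "z \<in> bd (Jt t)"
    then have zS: "z \<in> Simp (Jt 2)" using True by (simp add: bd_def)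
    have zI: "z \<in> Simp I0" using Simp_sub_I0[OF Jt_sub zS] .
    have z2: "z (i,2) = 0" for i using zS by (auto simp: Simp_def Jt_mem)
    obtain q where q: "q \<in> Jt 2" "z q = 0" using z True by (auto simp: bd_def)
    obtain i u where iu: "q = (i,u)" "i < k" "u < 3" "u \<noteq> 2" using q(1) by (cases q) (auto simp: Jt_mem)
    then have "u = 0 \<or> u = 1" by auto
    then have "z (i,0) = 0 \<or> z (i,1) = 0" using q iu by auto
    moreover have "\<forall>i<k. \<exists>t<3. z (i,t) = 0" using z2 ex3[of "\<lambda>t. z (_,t) = 0"] by blast
    ultimately show "z \<in> Sp" using zI iu by (auto simp: Sp_def)
  qed
qed

lemma relfr_Dt: "t < 3 \<Longrightarrow> rel_frontier (Dt t) = L ` bd (Jt t)"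
  unfolding Dt_def by (rule relfr_eq[OF Jt_sub indep_Jt inj_Jt])

lemma relint_Dt: "t < 3 \<Longrightarrow> rel_interior (Dt t) = L ` pos (Jt t)"
  unfolding Dt_def by (rule relint_eq[OF Jt_sub indep_Jt])

lemma bd_Int: assumes t: "t < 3" "t' < 3" "t \<noteq> t'"
  shows "bd (Jt t) \<inter> bd (Jt t') = Simp (Jt t \<inter> Jt t')"
proof
  show "bd (Jt t) \<inter> bd (Jt t') \<subseteq> Simp (Jt t \<inter> Jt t')"
  proof
    fix z assume "z \<in> bd (Jt t) \<inter> bd (Jt t')"
    then have z: "z \<in> Simp (Jt t)" "z \<in> Simp (Jt t')" by (auto simp: bd_def)
    have sub: "Jt t \<inter> Jt t' \<subseteq> I0" using Jt_sub by blast
    show "z \<in> Simp (Jt t \<inter> Jt t')"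
      using z unfolding Simp_iff[OF Jt_sub] Simp_iff[OF sub] by blast
  qed
next
  show "Simp (Jt t \<inter> Jt t') \<subseteq> bd (Jt t) \<inter> bd (Jt t')"
  proof
    fix z assume z: "z \<in> Simp (Jt t \<inter> Jt t')"
    have sub: "Jt t \<inter> Jt t' \<subseteq> I0" using Jt_sub by blast
    have zz: "\<forall>q. q \<notin> Jt t \<inter> Jt t' \<longrightarrow> z q = 0" "\<forall>q\<in>Jt t \<inter> Jt t'. 0 \<le> z q" "sum z I0 = 1"
      using z unfolding Simp_iff[OF sub] by auto
    have nn: "0 \<le> z q" for q
    proof (cases "q \<in> Jt t \<inter> Jt t'")
      case True then show ?thesis using zz(2) by blast
    next
      case False then have "z q = 0" using zz(1) by blast
      then show ?thesis by simp
    qed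
    have s1: "z \<in> Simp (Jt t)" unfolding Simp_iff[OF Jt_sub] using zz nn by blast
    have s2: "z \<in> Simp (Jt t')" unfolding Simp_iff[OF Jt_sub] using zz nn by blast
    have q1: "(0,t') \<in> Jt t" "(0,t') \<notin> Jt t'" using t k_pos by (auto simp: Jt_mem)
    have q2: "(0,t) \<in> Jt t'" "(0,t) \<notin> Jt t" using t k_pos by (auto simp: Jt_mem)
    have "z (0,t') = 0" "z (0,t) = 0" using zz(1) q1 q2 by auto
    then show "z \<in> bd (Jt t) \<inter> bd (Jt t')" using s1 s2 q1 q2 unfolding bd_def by blast
  qed
qed

lemma relfr_Int: assumes t: "t < 3" "t' < 3" "t \<noteq> t'"
  shows "rel_frontier (Dt t) \<inter> rel_frontier (Dt t') = convex hull (vtx ` Jt t \<inter> vtx ` Jt t')"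
proof -
  have sub: "Jt t \<inter> Jt t' \<subseteq> I0" using Jt_sub by blast
  have "rel_frontier (Dt t) \<inter> rel_frontier (Dt t') = L ` bd (Jt t) \<inter> L ` bd (Jt t')"
    using relfr_Dt t by simp
  also have "... = L ` (bd (Jt t) \<inter> bd (Jt t'))"
    by (rule inj_on_image_Int[OF inj_Sp bd_Sp[OF t(1)] bd_Sp[OF t(2)], symmetric])
  also have "... = L ` Simp (Jt t \<inter> Jt t')" using bd_Int[OF t] by simp
  also have "... = convex hull (vtx ` (Jt t \<inter> Jt t'))" using hull_eq[OF sub] by simp
  also have "vtx ` (Jt t \<inter> Jt t') = vtx ` Jt t \<inter> vtx ` Jt t'"
    by (rule inj_on_image_Int[OF vtx_inj Jt_sub Jt_sub])
  finally show ?thesis .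
qed

lemma card_Int: assumes t: "t < 3" "t' < 3" "t \<noteq> t'"
  shows "card (vtx ` Jt t \<inter> vtx ` Jt t') = k"
proof -
  define u where "u = 3 - t - t'"
  have u: "u < 3" "u \<noteq> t" "u \<noteq> t'" using t unfolding u_def by arith+
  have "vtx ` Jt t \<inter> vtx ` Jt t' = vtx ` (Jt t \<inter> Jt t')"
    by (rule inj_on_image_Int[OF vtx_inj Jt_sub Jt_sub, symmetric])
  moreover have "card (vtx ` (Jt t \<inter> Jt t')) = card (Jt t \<inter> Jt t')"
    using card_vtx Jt_sub by blast
  ultimately show ?thesis using Jt_Int[OF t u] by (simp add: card_cartesian_product)
qed

lemma relint_disj: "rel_interior (Dt 1) \<inter> rel_interior (Dt 0) = {}"
proof -
  have p1: "pos (Jt 1) \<subseteq> Sp" "pos (Jt 0) \<subseteq> Sp" using Simp_Jt_Sp[of 1] Simp_Jt_Sp[of 0] by (auto simp: pos_def)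
  have "rel_interior (Dt 1) \<inter> rel_interior (Dt 0) = L ` (pos (Jt 1) \<inter> pos (Jt 0))"
    using relint_Dt[of 1] relint_Dt[of 0] inj_on_image_Int[OF inj_Sp p1] by simp
  moreover have "pos (Jt 1) \<inter> pos (Jt 0) = {}"
  proof -
    have "(0,0) \<in> Jt 1" "(0,0) \<notin> Jt 0" using k_pos by (auto simp: Jt_mem)
    then show ?thesis by (auto simp: pos_def Simp_def)
  qed
  ultimately show ?thesis by simp
qed

lemma Dt_sub: "t < 3 \<Longrightarrow> Dt t \<subseteq> Dt 2"
proof -
  assume t: "t < 3"
  then have "t = 0 \<or> t = 1 \<or> t = 2" by auto
  then show ?thesis
  proof (elim disjE)
    assume "t = 2" then show ?thesis by simp
  next
    assume t0: "t = 0" show ?thesis unfolding t0 Dt2_eq Dt_eq[of 0] using Simp_Jt_Sp[of 0] by auto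
  next
    assume t1: "t = 1" show ?thesis unfolding t1 Dt2_eq Dt_eq[of 1] using Simp_Jt_Sp[of 1] by auto
  qed
qed

lemma simplex_Jt: "t < 3 \<Longrightarrow> simplex_verts (2 * k - 1) (vtx ` Jt t)"
  unfolding simplex_verts_def using fin_vtx[OF Jt_sub] card_vtx[OF Jt_sub] card_Jt indep_Jt k_pos by auto

lemma Jc_restrict: "Jc (restrict c {..<k}) = Jc c"
  by (auto simp: Jc_def I0_def)

lemma finite_CC: "finite CC"
proof -
  have "CC \<subseteq> {..<k} \<rightarrow>\<^sub>E {..<3::nat}" by (auto simp: CC_def)
  moreover have "finite ({..<k} \<rightarrow>\<^sub>E {..<3::nat})" by (intro finite_PiE) auto
  ultimately show ?thesis using finite_subset by blast
qed

lemma R_Om: assumes "z \<in> Om" shows "R z \<in> Om"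
proof -
  obtain c where c: "c \<in> CC" "z \<in> Simp (Jc c)" using assms by (auto simp: Om_def)
  have clt: "\<forall>i<k. c i < 3" using CC_lt[OF c(1)] .
  define c' where "c' = restrict (\<lambda>i. (c i + 2) mod 3) {..<k}"
  have "R z \<in> Simp (Jc (\<lambda>i. (c i + 2) mod 3))" by (rule R_Simp[OF c(2) clt])
  then have "R z \<in> Simp (Jc c')" unfolding c'_def Jc_restrict .
  moreover have "c' \<in> CC"
  proof -
    obtain i j where ij: "i < k" "j < k" "c i \<noteq> c j" using c(1) by (auto simp: CC_def)
    have "c i < 3" "c j < 3" using ij clt by auto
    then have "c i = 0 \<or> c i = 1 \<or> c i = 2" "c j = 0 \<or> c j = 1 \<or> c j = 2" by auto
    then have "(c i + 2) mod 3 \<noteq> (c j + 2) mod 3" using ij(3) by (elim disjE) simp_all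
    moreover have "c' \<in> {..<k} \<rightarrow>\<^sub>E {..<3::nat}" by (auto simp: c'_def)
    ultimately show ?thesis using ij unfolding CC_def c'_def by auto
  qed
  ultimately show ?thesis by (auto simp: Om_def)
qed

lemma Om_union: "L ` Om = (\<Union>c\<in>CC. convex hull (vtx ` Jc c))"
  unfolding Om_def by (simp add: image_UN hull_eq[OF Jc_sub])

lemma Om_closed: "closed (L ` Om)"
  unfolding Om_union
  by (intro closed_UN finite_CC ballI compact_imp_closed compact_convex_hull finite_imp_compact fin_vtx[OF Jc_sub])

lemma Om_L: "closure (Dt 2 - Dt 1 - Dt 0) = L ` Om"
proof -
  define X where "X = Dt 2 - Dt 1 - Dt 0"
  have S1: "Simp (Jt 1) \<subseteq> Sp" and S0: "Simp (Jt 0) \<subseteq> Sp" using Simp_Jt_Sp by auto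
  have inX: "L z \<in> X" if z: "z \<in> Sp" "z \<notin> Simp (Jt 1)" "z \<notin> Simp (Jt 0)" for z
  proof -
    have "L z \<notin> L ` Simp (Jt 1)" using z inj_on_image_mem_iff[OF inj_Sp z(1) S1] by blast
    moreover have "L z \<notin> L ` Simp (Jt 0)" using z inj_on_image_mem_iff[OF inj_Sp z(1) S0] by blast
    ultimately show ?thesis using z(1) unfolding X_def Dt2_eq Dt_eq[of 1] Dt_eq[of 0] by blast
  qed
  have a: "X \<subseteq> L ` Om"
  proof
    fix x assume "x \<in> X"
    then have x: "x \<in> L ` Sp" "x \<notin> L ` Simp (Jt 1)" "x \<notin> L ` Simp (Jt 0)"
      unfolding X_def Dt2_eq Dt_eq[of 1] Dt_eq[of 0] by simp_all
    then obtain z where z: "z \<in> Sp" "x = L z" by blast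
    have zn: "z \<notin> Simp (Jt 1)" "z \<notin> Simp (Jt 0)" using x(2,3) z(2) by blast+
    have zI: "z \<in> Simp I0" and per: "\<forall>i<k. \<exists>t<3. z (i,t) = 0" using z(1) by (auto simp: Sp_def)
    obtain i0 where i0: "i0 < k" "z (i0,0) = 0 \<or> z (i0,1) = 0" using z(1) by (auto simp: Sp_def)
    define t0 :: nat where "t0 = (if z (i0,0) = 0 then 0 else 1)"
    define c where "c i = (if i = i0 then t0 else (SOME t. t < 3 \<and> z (i,t) = 0))" for i
    have cprop: "c i < 3 \<and> z (i, c i) = 0" if "i < k" for i
    proof (cases "i = i0")
      case True
      show ?thesis
      proof (cases "z (i0,0) = 0")
        case True2: True
        then show ?thesis using True by (simp add: c_def t0_def)
      next
        case False
        then have "z (i0,1) = 0" using i0(2) by simp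
        then show ?thesis using True False by (simp add: c_def t0_def)
      qed
    next
      case False
      then show ?thesis using someI_ex[OF per[rule_format, OF that]] by (simp add: c_def)
    qed
    have zc: "z \<in> Simp (Jc c)" using Simp_JcI[OF zI] cprop by blast
    have ci0: "c i0 = t0" by (simp add: c_def)
    have "\<exists>i<k. c i \<noteq> c i0"
    proof (rule ccontr)
      assume nc: "\<not> (\<exists>i<k. c i \<noteq> c i0)"
      have "\<forall>i<k. z (i, t0) = 0"
      proof (intro allI impI)
        fix i assume i: "i < k"
        then have "c i = c i0" using nc by blast
        then have "c i = t0" using ci0 by simp
        then show "z (i, t0) = 0" using cprop[OF i] by simp
      qed
      then have "z \<in> Simp (Jc (\<lambda>_. t0))" using Simp_JcI[OF zI, of "\<lambda>_. t0"] by simp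
      then have zt: "z \<in> Simp (Jt t0)" by (simp add: Jt_def)
      show False
      proof (cases "t0 = 0")
        case True then show False using zt zn(2) by simp
      next
        case False then have "t0 = 1" unfolding t0_def by (simp split: if_splits)
        then show False using zt zn(1) by simp
      qed
    qed
    then obtain i' where i': "i' < k" "c i' \<noteq> c i0" by blast
    have "restrict c {..<k} \<in> {..<k} \<rightarrow>\<^sub>E {..<3::nat}" using cprop by (simp add: PiE_iff)
    moreover have "restrict c {..<k} i' \<noteq> restrict c {..<k} i0" using i' i0(1) by simp
    ultimately have "restrict c {..<k} \<in> CC" unfolding CC_def using i' i0(1) by blast
    moreover have "z \<in> Simp (Jc (restrict c {..<k}))" using zc by (simp add: Jc_restrict)
    ultimately have "z \<in> Om" unfolding Om_def by blast
    then show "x \<in> L ` Om" using z(2) by blast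
  qed
  have c: "L ` Om \<subseteq> closure X"
  proof
    fix x assume "x \<in> L ` Om"
    then obtain c z where cz: "c \<in> CC" "z \<in> Simp (Jc c)" "x = L z" by (auto simp: Om_def)
    define n where "n = real (card (Jc c))"
    have finJ: "finite (Jc c)" using finite_I0 Jc_sub finite_subset by blast
    have npos: "0 < n" using finJ Jc_ne by (simp add: n_def card_gt_0_iff)
    define zb where "zb q = (if q \<in> Jc c then 1 / n else 0)" for q
    have zbS: "zb \<in> Simp (Jc c)" using npos by (auto simp: Simp_def zb_def n_def)
    have clt: "\<forall>i<k. c i < 3" using CC_lt[OF cz(1)] .
    obtain ia ib where iab: "ia < k" "ib < k" "c ia \<noteq> c ib" using cz(1) unfolding CC_def by blast
    obtain i1 where i1: "i1 < k" "c i1 \<noteq> 1"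
    proof (cases "c ia = 1")
      case True then show ?thesis using that iab by auto
    next
      case False then show ?thesis using that iab by auto
    qed
    obtain i2 where i2: "i2 < k" "c i2 \<noteq> 0"
    proof (cases "c ia = 0")
      case True then show ?thesis using that iab by auto
    next
      case False then show ?thesis using that iab by auto
    qed
    have q1: "(i1,1) \<in> Jc c" "(i1,1) \<notin> Jt 1" using i1 by (auto simp: Jc_mem Jt_mem)
    have q2: "(i2,0) \<in> Jc c" "(i2,0) \<notin> Jt 0" using i2 by (auto simp: Jc_mem Jt_mem)
    have seg: "L (\<lambda>q. (1 - u) * z q + u * zb q) \<in> X" if u: "0 < u" "u \<le> 1" for u
    proof -
      define zu where "zu q = (1 - u) * z q + u * zb q" for q
      have zuS: "zu \<in> Simp (Jc c)"
      proof -
        have "sum zu (Jc c) = (1 - u) * sum z (Jc c) + u * sum zb (Jc c)"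
          by (simp add: zu_def sum.distrib sum_distrib_left)
        then have "sum zu (Jc c) = 1" using cz(2) zbS by (simp add: Simp_def)
        moreover have "0 \<le> zu q" if "q \<in> Jc c" for q
          using that u cz(2) zbS by (auto simp: zu_def Simp_def intro!: add_nonneg_nonneg mult_nonneg_nonneg)
        moreover have "zu q = 0" if qn: "q \<notin> Jc c" for q
        proof -
          have "z q = 0" using qn cz(2) unfolding Simp_def by blast
          then show ?thesis using qn by (simp add: zu_def zb_def)
        qed
        ultimately show ?thesis by (auto simp: Simp_def)
      qed
      have zpos: "0 < zu q" if "q \<in> Jc c" for q
      proof -
        have "0 \<le> (1 - u) * z q" using u cz(2) that by (auto simp: Simp_def)
        moreover have "0 < u * zb q" using u npos that by (simp add: zb_def)
        ultimately show ?thesis by (simp add: zu_def)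
      qed
      have "zu \<in> Sp" using zuS Simp_CC_Sp[OF cz(1)] by blast
      moreover have "zu \<notin> Simp (Jt 1)"
      proof
        assume "zu \<in> Simp (Jt 1)"
        then have "zu (i1,1) = 0" using q1(2) unfolding Simp_def by blast
        then show False using zpos[OF q1(1)] by simp
      qed
      moreover have "zu \<notin> Simp (Jt 0)"
      proof
        assume "zu \<in> Simp (Jt 0)"
        then have "zu (i2,0) = 0" using q2(2) unfolding Simp_def by blast
        then show False using zpos[OF q2(1)] by simp
      qed
      ultimately have "L zu \<in> X" by (rule inX)
      moreover have "zu = (\<lambda>q. (1 - u) * z q + u * zb q)" by (rule ext) (simp add: zu_def)
      ultimately show ?thesis by simp
    qed
    have Lseg: "L (\<lambda>q. (1 - u) * z q + u * zb q) = (1 - u) *\<^sub>R L z + u *\<^sub>R L zb" for u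
      by (rule L_lin)
    show "x \<in> closure X"
    proof (cases "L z = L zb")
      case True
      have "L (\<lambda>q. (1 - 1) * z q + 1 * zb q) \<in> X" by (rule seg) simp_all
      moreover have "(\<lambda>q. (1 - 1) * z q + 1 * zb q) = zb" by (rule ext) simp
      ultimately have "L zb \<in> X" by simp
      then have "L z \<in> X" using True by simp
      then show ?thesis using cz(3) closure_subset by blast
    next
      case False
      have "open_segment (L z) (L zb) \<subseteq> X"
      proof
        fix y assume "y \<in> open_segment (L z) (L zb)"
        then obtain u where u: "0 < u" "u < 1" "y = (1 - u) *\<^sub>R L z + u *\<^sub>R L zb"
          unfolding in_segment(2) by blast
        have "L (\<lambda>q. (1 - u) * z q + u * zb q) \<in> X" by (rule seg) (use u in simp_all)
        then show "y \<in> X" unfolding Lseg u(3) .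
      qed
      then have "closure (open_segment (L z) (L zb)) \<subseteq> closure X" by (rule closure_mono)
      then have "closed_segment (L z) (L zb) \<subseteq> closure X" using False by (simp add: closure_open_segment)
      moreover have "L z \<in> closed_segment (L z) (L zb)" by (rule ends_in_segment(1))
      ultimately show ?thesis using cz(3) by blast
    qed
  qed
  have "closure X \<subseteq> L ` Om" by (rule closure_minimal[OF a Om_closed])
  then show ?thesis using c by (simp add: X_def)
qed

lemma sig_Om: assumes "x \<in> L ` Om" shows "sig x \<in> L ` Om" "sig (sig (sig x)) = x"
proof -
  obtain z where z: "z \<in> Om" "x = L z" using assms by auto
  have zS: "z \<in> Sp" using z Om_Sp by blast
  have R1: "R z \<in> Om" using R_Om[OF z(1)] .
  have R2: "R (R z) \<in> Om" using R_Om[OF R1] .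
  have s1: "sig x = L (R z)" using sig_L[OF zS] z by simp
  then show "sig x \<in> L ` Om" using R1 by blast
  have s2: "sig (sig x) = L (R (R z))" using s1 sig_L R1 Om_Sp by auto
  have s3: "sig (sig (sig x)) = L (R (R (R z)))" using s2 sig_L R2 Om_Sp by auto
  have "z \<in> Simp I0" using zS by (simp add: Sp_def)
  then show "sig (sig (sig x)) = x" using s3 R3 z by simp
qed

lemma affine_cont: "affine_on S (f :: real^'n \<Rightarrow> real^'n) \<Longrightarrow> continuous_on S f"
proof -
  assume "affine_on S f"
  then obtain h c where hc: "linear h" "\<forall>x\<in>S. f x = h x + c" by (auto simp: affine_on_def)
  have "continuous_on S (\<lambda>x. h x + c)"
    using hc(1) by (intro continuous_intros linear_continuous_on) (simp add: linear_conv_bounded_linear)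
  then show ?thesis using hc(2) continuous_on_cong by (metis (no_types, lifting))
qed

lemma affine_piece: "c \<in> CC \<Longrightarrow> affine_on (convex hull (vtx ` Jc c)) sig"
  unfolding hull_eq[OF Jc_sub] by (rule affine_sig[OF Jc_sub Jc_ne inj_CC]) (auto simp: Simp_CC_Sp)

lemma sig_cont: "continuous_on (L ` Om) sig"
  unfolding Om_union
  by (intro continuous_on_closed_Union finite_CC affine_cont affine_piece compact_imp_closed
      compact_convex_hull finite_imp_compact fin_vtx[OF Jc_sub])

lemma sig_pl: "pl_on (L ` Om) sig"
  unfolding pl_on_def
proof (intro exI[of _ "(\<lambda>c. vtx ` Jc c) ` CC"] conjI)
  show "finite ((\<lambda>c. vtx ` Jc c) ` CC)" using finite_CC by simp
next
  show "\<forall>W\<in>(\<lambda>c. vtx ` Jc c) ` CC. finite W \<and> W \<noteq> {} \<and> \<not> affine_dependent W \<and> affine_on (convex hull W) sig"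
  proof
    fix W assume "W \<in> (\<lambda>c. vtx ` Jc c) ` CC"
    then obtain c where c: "c \<in> CC" "W = vtx ` Jc c" by auto
    show "finite W \<and> W \<noteq> {} \<and> \<not> affine_dependent W \<and> affine_on (convex hull W) sig"
      using c fin_vtx[OF Jc_sub] Jc_ne aff_indep[OF Jc_sub Jc_ne inj_CC] affine_piece by auto
  qed
next
  show "\<Union> ((\<lambda>W. convex hull W) ` (\<lambda>c. vtx ` Jc c) ` CC) = L ` Om"
    unfolding Om_union by (simp add: image_image)
qed

lemma sig_nontriv: "\<exists>x\<in>L ` Om. sig x \<noteq> x"
proof -
  define c0 where "c0 = restrict (\<lambda>i. if i = 0 then 1 else (0::nat)) {..<k}"
  have c0: "c0 \<in> CC" using k2 by (auto simp: CC_def c0_def intro!: exI[of _ 0] exI[of _ 1])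
  have q: "(0,0) \<in> I0" using k_pos by (simp add: I0_def)
  have dI: "dl (0,0) \<in> Simp I0"
    using q sum.delta[OF finite_I0, of "(0,0)" "\<lambda>_. 1::real"] by (auto simp: Simp_def dl_def)
  have "dl (0,0) \<in> Simp (Jc c0)" by (rule Simp_JcI[OF dI]) (auto simp: dl_def c0_def)
  then have mem: "L (dl (0,0)) \<in> L ` Om" using c0 by (auto simp: Om_def)
  have "dl (0,0) \<in> Sp" using \<open>dl (0,0) \<in> Simp (Jc c0)\<close> Simp_CC_Sp[OF c0] by blast
  then have "sig (L (dl (0,0))) = tvx (0,0)" using sig_L LR_dl[OF q] by simp
  moreover have "L (dl (0,0)) = vtx (0,0)" using L_dl[OF q] .
  moreover have "tvx (0,0) \<noteq> vtx (0,0)" by (simp add: tvx_def vtx_def e_ne_p[symmetric])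
  ultimately show ?thesis using mem by metis
qed

lemma R_bd: assumes t: "t < 3" shows "R ` bd (Jt t) \<subseteq> bd (Jt ((t + 2) mod 3))"
proof
  fix w assume "w \<in> R ` bd (Jt t)"
  then obtain z where z: "z \<in> bd (Jt t)" "w = R z" by auto
  have zS: "z \<in> Simp (Jc (\<lambda>_. t))" using z by (simp add: bd_def Jt_def)
  have "R z \<in> Simp (Jc (\<lambda>i. (t + 2) mod 3))" by (rule R_Simp[OF zS]) (use t in auto)
  then have wS: "w \<in> Simp (Jt ((t + 2) mod 3))" using z by (simp add: Jt_def)
  obtain i u where iu: "(i,u) \<in> Jt t" "z (i,u) = 0" using z by (auto simp: bd_def)
  have iu2: "i < k" "u < 3" "u \<noteq> t" using iu by (auto simp: Jt_mem)
  have "(u + 2) mod 3 \<noteq> (t + 2) mod 3"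
  proof -
    have "t = 0 \<or> t = 1 \<or> t = 2" "u = 0 \<or> u = 1 \<or> u = 2" using t iu2 by auto
    then show ?thesis using iu2(3) by (elim disjE) simp_all
  qed
  then have "(i, (u + 2) mod 3) \<in> Jt ((t + 2) mod 3)" using iu2 t by (auto simp: Jt_mem)
  moreover have "R z (i, (u + 2) mod 3) = z (i,u)"
  proof -
    have "u = 0 \<or> u = 1 \<or> u = 2" using iu2 by auto
    then show ?thesis by (elim disjE) (simp_all add: R_def)
  qed
  ultimately show "w \<in> bd (Jt ((t + 2) mod 3))" using wS iu z(2) by (auto simp: bd_def)
qed

lemma R_bd_eq: assumes t: "t < 3" shows "R ` bd (Jt t) = bd (Jt ((t + 2) mod 3))"
proof
  show "R ` bd (Jt t) \<subseteq> bd (Jt ((t + 2) mod 3))" by (rule R_bd[OF t])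
  show "bd (Jt ((t + 2) mod 3)) \<subseteq> R ` bd (Jt t)"
  proof
    fix w assume w: "w \<in> bd (Jt ((t + 2) mod 3))"
    have "R w \<in> bd (Jt (((t + 2) mod 3 + 2) mod 3))" using R_bd[of "(t + 2) mod 3"] w by auto
    then have "R (R w) \<in> bd (Jt ((((t + 2) mod 3 + 2) mod 3 + 2) mod 3))"
      using R_bd[of "((t + 2) mod 3 + 2) mod 3"] by auto
    moreover have "(((t + 2) mod 3 + 2) mod 3 + 2) mod 3 = t"
    proof -
      have "t = 0 \<or> t = 1 \<or> t = 2" using t by auto
      then show ?thesis by (elim disjE) simp_all
    qed
    ultimately have "R (R w) \<in> bd (Jt t)" by simp
    moreover have "w \<in> Simp I0" using w Simp_sub_I0[OF Jt_sub] by (auto simp: bd_def)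
    ultimately show "w \<in> R ` bd (Jt t)" using R3 by (metis image_eqI)
  qed
qed

lemma sig_bd: assumes t: "t < 3" shows "sig ` rel_frontier (Dt t) = rel_frontier (Dt ((t + 2) mod 3))"
proof -
  have t': "(t + 2) mod 3 < 3" by simp
  have "sig ` rel_frontier (Dt t) = sig ` L ` bd (Jt t)" using relfr_Dt[OF t] by simp
  also have "... = L ` R ` bd (Jt t)"
    using bd_Sp[OF t] sig_L by (auto simp: image_image intro!: image_cong)
  also have "... = L ` bd (Jt ((t + 2) mod 3))" using R_bd_eq[OF t] by simp
  also have "... = rel_frontier (Dt ((t + 2) mod 3))" using relfr_Dt[OF t'] by simp
  finally show ?thesis .
qed

lemma sig_aff_bd: assumes t: "t < 3" shows "affine_on (rel_frontier (Dt t)) sig"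
  unfolding relfr_Dt[OF t] by (rule affine_sig[OF Jt_sub Jt_ne inj_Jt[OF t]]) (use bd_Sp[OF t] in \<open>auto simp: bd_def\<close>)

lemma hom: "homeomorphism (L ` Om) (L ` Om) sig (sig \<circ> sig)"
proof -
  have sub: "sig ` (L ` Om) \<subseteq> L ` Om" using sig_Om(1) by blast
  have eq: "sig ` (L ` Om) = L ` Om"
  proof
    show "L ` Om \<subseteq> sig ` (L ` Om)"
    proof
      fix x assume x: "x \<in> L ` Om"
      have "sig (sig x) \<in> L ` Om" using sig_Om(1)[OF sig_Om(1)[OF x]] .
      moreover have "x = sig (sig (sig x))" using sig_Om(2)[OF x] by simp
      ultimately show "x \<in> sig ` (L ` Om)" by blast
    qed
  qed (rule sub)
  have eq2: "(sig \<circ> sig) ` (L ` Om) = L ` Om" using eq image_comp[of sig sig "L ` Om"] by simp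
  have c2: "continuous_on (L ` Om) (sig \<circ> sig)"
    by (rule continuous_on_compose[OF sig_cont]) (simp add: eq sig_cont)
  show ?thesis unfolding homeomorphism_def
    using eq eq2 sig_cont c2 sig_Om(2) by simp
qed

lemma main: "modular_block k (vtx ` Jt 2) (vtx ` Jt 1) (vtx ` Jt 0) sig"
proof -
  define A where "A = vtx ` Jt 2"
  define B where "B = vtx ` Jt 1"
  define C where "C = vtx ` Jt 0"
  define Omg where "Omg = L ` Om"
  have DA: "convex hull A = Dt 2" and DB: "convex hull B = Dt 1" and DC: "convex hull C = Dt 0"
    by (simp_all add: A_def B_def C_def Dt_def)
  have sA: "simplex_verts (2*k-1) A" and sB: "simplex_verts (2*k-1) B" and sC: "simplex_verts (2*k-1) C"
    using simplex_Jt[of 2] simplex_Jt[of 1] simplex_Jt[of 0] by (simp_all add: A_def B_def C_def)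
  have sub1: "convex hull B \<subseteq> convex hull A" and sub2: "convex hull C \<subseteq> convex hull A"
    unfolding DA DB DC using Dt_sub[of 1] Dt_sub[of 0] by simp_all
  have ri: "rel_interior (convex hull B) \<inter> rel_interior (convex hull C) = {}"
    unfolding DB DC by (rule relint_disj)
  have cAB: "card (A \<inter> B) = k" and cBA: "card (B \<inter> A) = k" and cAC: "card (A \<inter> C) = k"
    and cCA: "card (C \<inter> A) = k" and cBC: "card (B \<inter> C) = k" and cCB: "card (C \<inter> B) = k"
    unfolding A_def B_def C_def by (simp_all add: card_Int)
  have fAB: "rel_frontier (convex hull A) \<inter> rel_frontier (convex hull B) = convex hull (A \<inter> B)"
    unfolding DA DB unfolding A_def B_def by (rule relfr_Int) simp_all
  have fBA: "rel_frontier (convex hull B) \<inter> rel_frontier (convex hull A) = convex hull (B \<inter> A)"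
    unfolding DA DB unfolding A_def B_def by (rule relfr_Int) simp_all
  have fAC: "rel_frontier (convex hull A) \<inter> rel_frontier (convex hull C) = convex hull (A \<inter> C)"
    unfolding DA DC unfolding A_def C_def by (rule relfr_Int) simp_all
  have fCA: "rel_frontier (convex hull C) \<inter> rel_frontier (convex hull A) = convex hull (C \<inter> A)"
    unfolding DA DC unfolding A_def C_def by (rule relfr_Int) simp_all
  have fBC: "rel_frontier (convex hull B) \<inter> rel_frontier (convex hull C) = convex hull (B \<inter> C)"
    unfolding DB DC unfolding B_def C_def by (rule relfr_Int) simp_all
  have fCB: "rel_frontier (convex hull C) \<inter> rel_frontier (convex hull B) = convex hull (C \<inter> B)"
    unfolding DB DC unfolding B_def C_def by (rule relfr_Int) simp_all
  have Omeq: "closure (convex hull A - convex hull B - convex hull C) = Omg"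
    unfolding DA DB DC Omg_def by (rule Om_L)
  have hm: "homeomorphism Omg Omg sig (sig \<circ> sig)" unfolding Omg_def by (rule hom)
  have o3: "\<forall>x\<in>Omg. sig (sig (sig x)) = x" unfolding Omg_def using sig_Om(2) by blast
  have nt: "\<exists>x\<in>Omg. sig x \<noteq> x" unfolding Omg_def by (rule sig_nontriv)
  have pl: "pl_on Omg sig" unfolding Omg_def by (rule sig_pl)
  have aA: "affine_on (rel_frontier (convex hull A)) sig" unfolding DA by (rule sig_aff_bd) simp
  have aB: "affine_on (rel_frontier (convex hull B)) sig" unfolding DB by (rule sig_aff_bd) simp
  have aC: "affine_on (rel_frontier (convex hull C)) sig" unfolding DC by (rule sig_aff_bd) simp
  have mA: "sig ` rel_frontier (convex hull A) = rel_frontier (convex hull B)"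
    unfolding DA DB using sig_bd[of 2] by simp
  have mB: "sig ` rel_frontier (convex hull B) = rel_frontier (convex hull C)"
    unfolding DB DC using sig_bd[of 1] by simp
  have mC: "sig ` rel_frontier (convex hull C) = rel_frontier (convex hull A)"
  proof -
    have "((0::nat) + 2) mod 3 = 2" by simp
    then show ?thesis unfolding DC DA using sig_bd[of 0] by (simp only:)
  qed
  show ?thesis
    unfolding A_def[symmetric] B_def[symmetric] C_def[symmetric] modular_block_def Let_def
    using sA sB sC sub1 sub2 ri cAB cBA cAC cCA cBC cCB fAB fBA fAC fCA fBC fCB Omeq hm o3 nt pl aA aB aC mA mB mC
    by simp
qed

lemma main': "\<exists>(V1 :: (real^'n) set) V2 \<sigma>. modular_block k (range (\<lambda>i::'n. axis i 1)) V1 V2 \<sigma>"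
  using main range_e by metis

end

theorem mainTheorem5:
  fixes k :: nat
  assumes "k \<ge> 2" and "CARD('n::finite) = 2 * k"
  shows "\<exists>(V1 :: (real^'n) set) V2 \<sigma>.
           modular_block k (range (\<lambda>i::'n. axis i 1)) V1 V2 \<sigma>"
proof -
  obtain idx :: "nat \<Rightarrow> 'n" where idx: "bij_betw idx {0..<card (UNIV::'n set)} UNIV"
    using ex_bij_betw_nat_finite[of "UNIV::'n set"] by auto
  then have "bij_betw idx {..<2*k} (UNIV::'n set)" using assms(2) by (simp add: atLeast0LessThan)
  then interpret blk k idx using assms(1) by unfold_locales
  show ?thesis by (rule main')
qed

end
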